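(* There exists a universal constant $C$ such that for all functions $f:\mathcal{S}\to\mathcal{Z}$ with $\mathcal{S}\subseteq\mathcal{X}\times\mathcal{Y}$ and all $\varepsilon,\delta\in(0,\tfrac12)$, $$\mathrm{IC}_D(f,\varepsilon)\ge\frac{\delta^2}{C}\Big[\log_2\overline{\mathrm{prt}}_{\varepsilon+3\delta}(f)-\log_2|\mathcal{Z}|\Big]-\delta .$$
   Context: $\mathcal{X},\mathcal{Y},\mathcal{Z}$ finite, $\mathcal{S}\subseteq\mathcal{X}\times\mathcal{Y}$ valid inputs, $f:\mathcal{S}\to\mathcal{Z}$; rectangles are sets $A\times B$, $A\subseteq\mathcal{X},B\subseteq\mathcal{Y}$ (empty one included). Protocols are two-party randomized (public and private coins); the transcript $\Pi$ contains messages, public coins and output. $\mathrm{err}_f(\pi;x,y)=\Pr[\pi(x,y)\ne f(x,y)]$ on $\mathcal{S}$ and $0$ off $\mathcal{S}$; $\mathrm{err}_f(\pi;\mu)=\mathbb{E}_{(X,Y)\sim\mu}\mathrm{err}_f(\pi;X,Y)$. $\mathrm{IC}_\mu(\pi)=I(X;\Pi\mid Y)+I(Y;\Pi\mid X)$ for $(X,Y)\sim\mu$; $\mathrm{IC}_\mu(f,\varepsilon)=\inf_{\pi:\mathrm{err}_f(\pi;\mu)\le\varepsilon}\mathrm{IC}_\mu(\pi)$; $\mathrm{IC}_D(f,\varepsilon)=\max_\mu\mathrm{IC}_\mu(f,\varepsilon)$. $\overline{\mathrm{prt}}^\mu_\varepsilon(f)$ is the value of: minimize $1/\eta$ over $\eta>0$,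 $p_{R,z}\ge0$ (all rectangles $R$, $z\in\mathcal{Z}$) s.t. (i) $\sum_{(x,y)\in\mathcal{S}}\mu(x,y)\sum_{R\ni(x,y)}p_{R,f(x,y)}+\sum_{(x,y)\notin\mathcal{S}}\mu(x,y)\sum_{z,R\ni(x,y)}p_{R,z}\ge(1-\varepsilon)\eta$; (ii) $\forall (x,y)$: $\sum_{z,R\ni(x,y)}p_{R,z}\le\eta$; (iii) $\sum_{R,z}p_{R,z}=1$. $\overline{\mathrm{prt}}_\varepsilon(f)=\max_\mu\overline{\mathrm{prt}}^\mu_\varepsilon(f)$. *)

theory Defs
  imports "HOL-Probability.Probability_Mass_Function"
begin

text \<open>A node is either an output leaf, a message bit sent by Alice
  (distribution depends only on her input -- private coins), a message bit sent
  by Bob, or a public coin (distribution independent of the inputs).\<close>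

datatype ('x, 'y, 'z) proto =
    Out 'z
  | AMsg "'x \<Rightarrow> bool pmf" "bool \<Rightarrow> ('x, 'y, 'z) proto"
  | BMsg "'y \<Rightarrow> bool pmf" "bool \<Rightarrow> ('x, 'y, 'z) proto"
  | Pub "bool pmf" "bool \<Rightarrow> ('x, 'y, 'z) proto"

primrec run :: "('x, 'y, 'z) proto \<Rightarrow> 'x \<Rightarrow> 'y \<Rightarrow> (bool list \<times> 'z) pmf" where
  "run (Out z) x y = return_pmf ([], z)"
| "run (AMsg a k) x y = bind_pmf (a x) (\<lambda>b. map_pmf (\<lambda>(t, z). (b # t, z)) (run (k b) x y))"
| "run (BMsg a k) x y = bind_pmf (a y) (\<lambda>b. map_pmf (\<lambda>(t, z). (b # t, z)) (run (k b) x y))"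
| "run (Pub c k) x y = bind_pmf c (\<lambda>b. map_pmf (\<lambda>(t, z). (b # t, z)) (run (k b) x y))"

primrec outputs :: "('x, 'y, 'z) proto \<Rightarrow> 'z set" where
  "outputs (Out z) = {z}"
| "outputs (AMsg a k) = (\<Union>b. outputs (k b))"
| "outputs (BMsg a k) = (\<Union>b. outputs (k b))"
| "outputs (Pub c k) = (\<Union>b. outputs (k b))"

definition err_pt :: "('x \<times> 'y) set \<Rightarrow> ('x \<Rightarrow> 'y \<Rightarrow> 'z) \<Rightarrow> ('x, 'y, 'z) proto \<Rightarrow> 'x \<Rightarrow> 'y \<Rightarrow> real" where
  "err_pt S f \<pi> x y = (if (x, y) \<in> S then measure_pmf.prob (run \<pi> x y) {t. snd t \<noteq> f x y} else 0)"

definition err_dist :: "('x \<times> 'y) set \<Rightarrow> ('x \<Rightarrow> 'y \<Rightarrow> 'z) \<Rightarrow> ('x, 'y, 'z) proto \<Rightarrow> ('x \<times> 'y) pmf \<Rightarrow> real" where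
  "err_dist S f \<pi> \<mu> = measure_pmf.expectation \<mu> (\<lambda>(x, y). err_pt S f \<pi> x y)"

text \<open>Conditional mutual information I(A;C|B) (base 2) of a finitely supported joint
  distribution of (A,B,C).\<close>
definition cmi :: "('a \<times> 'b \<times> 'c) pmf \<Rightarrow> real" where
  "cmi P = (\<Sum>w\<in>set_pmf P. case w of (a, b, c) \<Rightarrow>
      pmf P (a, b, c) * log 2 (pmf P (a, b, c) * pmf (map_pmf (\<lambda>(a, b, c). b) P) b
        / (pmf (map_pmf (\<lambda>(a, b, c). (a, b)) P) (a, b) * pmf (map_pmf (\<lambda>(a, b, c). (b, c)) P) (b, c))))"

definition joint :: "('x, 'y, 'z) proto \<Rightarrow> ('x \<times> 'y) pmf \<Rightarrow> ('x \<times> 'y \<times> (bool list \<times> 'z)) pmf" where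
  "joint \<pi> \<mu> = bind_pmf \<mu> (\<lambda>(x, y). map_pmf (\<lambda>t. (x, y, t)) (run \<pi> x y))"

text \<open>IC_mu(pi) = I(X;Pi|Y) + I(Y;Pi|X).\<close>
definition IC :: "('x, 'y, 'z) proto \<Rightarrow> ('x \<times> 'y) pmf \<Rightarrow> real" where
  "IC \<pi> \<mu> = cmi (joint \<pi> \<mu>) + cmi (map_pmf (\<lambda>(x, y, t). (y, x, t)) (joint \<pi> \<mu>))"

definition IC_mu :: "'z set \<Rightarrow> ('x \<times> 'y) set \<Rightarrow> ('x \<Rightarrow> 'y \<Rightarrow> 'z) \<Rightarrow> ('x \<times> 'y) pmf \<Rightarrow> real \<Rightarrow> real" where
  "IC_mu Z S f \<mu> \<epsilon> = (INF \<pi> \<in> {\<pi>. outputs \<pi> \<subseteq> Z \<and> err_dist S f \<pi> \<mu> \<le> \<epsilon>}. IC \<pi> \<mu>)"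

definition IC_D :: "'x set \<Rightarrow> 'y set \<Rightarrow> 'z set \<Rightarrow> ('x \<times> 'y) set \<Rightarrow> ('x \<Rightarrow> 'y \<Rightarrow> 'z) \<Rightarrow> real \<Rightarrow> real" where
  "IC_D X Y Z S f \<epsilon> = (SUP \<mu> \<in> {\<mu>. set_pmf \<mu> \<subseteq> X \<times> Y}. IC_mu Z S f \<mu> \<epsilon>)"

definition rects :: "'x set \<Rightarrow> 'y set \<Rightarrow> ('x \<times> 'y) set set" where
  "rects X Y = {A \<times> B | A B. A \<subseteq> X \<and> B \<subseteq> Y}"

definition prt_feasible :: "'x set \<Rightarrow> 'y set \<Rightarrow> 'z set \<Rightarrow> ('x \<times> 'y) set \<Rightarrow> ('x \<Rightarrow> 'y \<Rightarrow> 'z)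
    \<Rightarrow> ('x \<times> 'y) pmf \<Rightarrow> real \<Rightarrow> real \<Rightarrow> (('x \<times> 'y) set \<Rightarrow> 'z \<Rightarrow> real) \<Rightarrow> bool" where
  "prt_feasible X Y Z S f \<mu> \<epsilon> \<eta> p \<longleftrightarrow>
     \<eta> > 0 \<and>
     (\<forall>R\<in>rects X Y. \<forall>z\<in>Z. p R z \<ge> 0) \<and>
     (\<Sum>xy\<in>S. pmf \<mu> xy * (\<Sum>R\<in>{R\<in>rects X Y. xy \<in> R}. p R (f (fst xy) (snd xy))))
       + (\<Sum>xy\<in>(X \<times> Y) - S. pmf \<mu> xy * (\<Sum>z\<in>Z. \<Sum>R\<in>{R\<in>rects X Y. xy \<in> R}. p R z))
       \<ge> (1 - \<epsilon>) * \<eta> \<and>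
     (\<forall>xy\<in>X \<times> Y. (\<Sum>z\<in>Z. \<Sum>R\<in>{R\<in>rects X Y. xy \<in> R}. p R z) \<le> \<eta>) \<and>
     (\<Sum>R\<in>rects X Y. \<Sum>z\<in>Z. p R z) = 1"

definition prt_mu :: "'x set \<Rightarrow> 'y set \<Rightarrow> 'z set \<Rightarrow> ('x \<times> 'y) set \<Rightarrow> ('x \<Rightarrow> 'y \<Rightarrow> 'z)
    \<Rightarrow> ('x \<times> 'y) pmf \<Rightarrow> real \<Rightarrow> real" where
  "prt_mu X Y Z S f \<mu> \<epsilon> = Inf {1 / \<eta> | \<eta> p. prt_feasible X Y Z S f \<mu> \<epsilon> \<eta> p}"

definition prt :: "'x set \<Rightarrow> 'y set \<Rightarrow> 'z set \<Rightarrow> ('x \<times> 'y) set \<Rightarrow> ('x \<Rightarrow> 'y \<Rightarrow> 'z) \<Rightarrow> real \<Rightarrow> real" where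
  "prt X Y Z S f \<epsilon> = (SUP \<mu> \<in> {\<mu>. set_pmf \<mu> \<subseteq> X \<times> Y}. prt_mu X Y Z S f \<mu> \<epsilon>)"

end

theory Submission
  imports Defs "HOL-Probability.Product_PMF" "HOL-Analysis.Harmonic_Numbers"
begin

primrec Fa :: "('x, 'y, 'z) proto \<Rightarrow> bool list \<times> 'z \<Rightarrow> 'x \<Rightarrow> real" where
  "Fa (Out z) t x = (if t = ([], z) then 1 else 0)"
| "Fa (AMsg a k) t x = (case fst t of [] \<Rightarrow> 0 | b # bs \<Rightarrow> pmf (a x) b * Fa (k b) (bs, snd t) x)"
| "Fa (BMsg a k) t x = (case fst t of [] \<Rightarrow> 0 | b # bs \<Rightarrow> Fa (k b) (bs, snd t) x)"
| "Fa (Pub c k) t x = (case fst t of [] \<Rightarrow> 0 | b # bs \<Rightarrow> pmf c b * Fa (k b) (bs, snd t) x)"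

primrec Gb :: "('x, 'y, 'z) proto \<Rightarrow> bool list \<times> 'z \<Rightarrow> 'y \<Rightarrow> real" where
  "Gb (Out z) t y = 1"
| "Gb (AMsg a k) t y = (case fst t of [] \<Rightarrow> 0 | b # bs \<Rightarrow> Gb (k b) (bs, snd t) y)"
| "Gb (BMsg a k) t y = (case fst t of [] \<Rightarrow> 0 | b # bs \<Rightarrow> pmf (a y) b * Gb (k b) (bs, snd t) y)"
| "Gb (Pub c k) t y = (case fst t of [] \<Rightarrow> 0 | b # bs \<Rightarrow> Gb (k b) (bs, snd t) y)"

primrec leaves :: "('x, 'y, 'z) proto \<Rightarrow> (bool list \<times> 'z) set" where
  "leaves (Out z) = {([], z)}"
| "leaves (AMsg a k) = (\<Union>b. (\<lambda>(bs, z). (b # bs, z)) ` leaves (k b))"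
| "leaves (BMsg a k) = (\<Union>b. (\<lambda>(bs, z). (b # bs, z)) ` leaves (k b))"
| "leaves (Pub c k) = (\<Union>b. (\<lambda>(bs, z). (b # bs, z)) ` leaves (k b))"

lemma finite_leaves: "finite (leaves \<pi>)"
  by (induction \<pi>) auto

lemma leaves_ne: "leaves \<pi> \<noteq> {}"
  by (induction \<pi>) auto

lemma leaves_outputs: "t \<in> leaves \<pi> \<Longrightarrow> snd t \<in> outputs \<pi>"
proof (induction \<pi> arbitrary: t)
  case (AMsg a k)
  then obtain b t0 where "t0 \<in> leaves (k b)" "t = (b # fst t0, snd t0)" by auto
  then show ?case using AMsg.IH[of "k b" t0] by auto
next
  case (BMsg a k)
  then obtain b t0 where "t0 \<in> leaves (k b)" "t = (b # fst t0, snd t0)" by auto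
  then show ?case using BMsg.IH[of "k b" t0] by auto
next
  case (Pub a k)
  then obtain b t0 where "t0 \<in> leaves (k b)" "t = (b # fst t0, snd t0)" by auto
  then show ?case using Pub.IH[of "k b" t0] by auto
qed simp

lemma Fa_nonneg: "Fa \<pi> t x \<ge> 0"
  by (induction \<pi> arbitrary: t) (auto split: list.splits)

lemma Fa_le1: "Fa \<pi> t x \<le> 1"
  by (induction \<pi> arbitrary: t) (auto split: list.splits intro!: mult_le_one Fa_nonneg pmf_le_1)

lemma Gb_nonneg: "Gb \<pi> t y \<ge> 0"
  by (induction \<pi> arbitrary: t) (auto split: list.splits)

lemma Gb_le1: "Gb \<pi> t y \<le> 1"
  by (induction \<pi> arbitrary: t) (auto split: list.splits intro!: mult_le_one Gb_nonneg pmf_le_1)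

lemma pmf_map_cons_Nil:
  fixes b :: bool and R :: "(bool list \<times> 'z) pmf"
  shows "pmf (map_pmf (\<lambda>(t, z). (b # t, z)) R) ([], z) = 0"
  by (rule pmf_map_outside) auto

lemma pmf_map_cons_Cons:
  fixes b :: bool and R :: "(bool list \<times> 'z) pmf"
  shows "pmf (map_pmf (\<lambda>(t, z). (b # t, z)) R) (b' # bs, z) = (if b' = b then pmf R (bs, z) else 0)"
proof (cases "b' = b")
  case True
  have inj: "inj (\<lambda>(t::bool list, z::'z). (b # t, z))" by (auto simp: inj_def)
  show ?thesis using True pmf_map_inj'[OF inj, of R "(bs, z)"] by simp
next
  case False
  have "pmf (map_pmf (\<lambda>(t, z). (b # t, z)) R) (b' # bs, z) = 0"
    by (rule pmf_map_outside) (use False in auto)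
  then show ?thesis using False by simp
qed

lemma pmf_bind_bool: "pmf (bind_pmf (M :: bool pmf) g) i = (\<Sum>b\<in>UNIV. pmf M b * pmf (g b) i)"
  by (simp add: pmf_bind integral_measure_pmf[of UNIV] mult.commute)

lemma sum_bool_if: "(\<Sum>b'\<in>(UNIV::bool set). (g b' :: real) * (if b = b' then h b' else 0)) = g b * h b"
  by (cases b) (simp_all add: UNIV_bool)

lemma run_factor: "pmf (run \<pi> x y) t = Fa \<pi> t x * Gb \<pi> t y"
proof (induction \<pi> arbitrary: t)
  case (Out z)
  then show ?case by (auto simp: pmf_return)
next
  case (AMsg a k)
  obtain l z where t: "t = (l, z)" by (cases t)
  show ?case
    using t by (cases l) (simp_all add: pmf_bind_bool pmf_map_cons_Nil pmf_map_cons_Cons sum_bool_if AMsg.IH)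
next
  case (BMsg a k)
  obtain l z where t: "t = (l, z)" by (cases t)
  show ?case
    using t by (cases l) (simp_all add: pmf_bind_bool pmf_map_cons_Nil pmf_map_cons_Cons sum_bool_if BMsg.IH)
next
  case (Pub a k)
  obtain l z where t: "t = (l, z)" by (cases t)
  show ?case
    using t by (cases l) (simp_all add: pmf_bind_bool pmf_map_cons_Nil pmf_map_cons_Cons sum_bool_if Pub.IH)
qed

lemma Fa_outside: "t \<notin> leaves \<pi> \<Longrightarrow> Fa \<pi> t x = 0"
proof (induction \<pi> arbitrary: t)
  case (Out z) then show ?case by auto
next
  case (AMsg a k)
  obtain l z where t: "t = (l, z)" by (cases t)
  show ?case
  proof (cases l)
    case (Cons b bs)
    have "(bs, z) \<notin> leaves (k b)" using AMsg.prems t Cons by force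
    then show ?thesis using t Cons AMsg.IH by simp
  qed (use t in simp)
next
  case (BMsg a k)
  obtain l z where t: "t = (l, z)" by (cases t)
  show ?case
  proof (cases l)
    case (Cons b bs)
    have "(bs, z) \<notin> leaves (k b)" using BMsg.prems t Cons by force
    then show ?thesis using t Cons BMsg.IH by simp
  qed (use t in simp)
next
  case (Pub a k)
  obtain l z where t: "t = (l, z)" by (cases t)
  show ?case
  proof (cases l)
    case (Cons b bs)
    have "(bs, z) \<notin> leaves (k b)" using Pub.prems t Cons by force
    then show ?thesis using t Cons Pub.IH by simp
  qed (use t in simp)
qed

lemma set_run_leaves: "set_pmf (run \<pi> x y) \<subseteq> leaves \<pi>"
proof
  fix t assume "t \<in> set_pmf (run \<pi> x y)"
  then have "Fa \<pi> t x * Gb \<pi> t y \<noteq> 0" by (simp add: set_pmf_eq run_factor)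
  then show "t \<in> leaves \<pi>" using Fa_outside by fastforce
qed

lemma sum_FaGb: "(\<Sum>t\<in>leaves \<pi>. Fa \<pi> t x * Gb \<pi> t y) = 1"
  using sum_pmf_eq_1[OF finite_leaves set_run_leaves, of \<pi> x y] by (simp add: run_factor)

lemma run_outputs: "t \<in> set_pmf (run \<pi> x y) \<Longrightarrow> snd t \<in> outputs \<pi>"
  by (meson set_run_leaves leaves_outputs subsetD)

lemma pmf_map_fin:
  assumes "finite W" "set_pmf M \<subseteq> W"
  shows "pmf (map_pmf g M) y = (\<Sum>w\<in>W. if g w = y then pmf M w else 0)"
proof -
  have "pmf (map_pmf g M) y = measure M (g -` {y})" by (rule pmf_map)
  also have "\<dots> = measure M (g -` {y} \<inter> set_pmf M)" by (simp add: measure_Int_set_pmf)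
  also have "\<dots> = (\<Sum>w\<in>g -` {y} \<inter> set_pmf M. pmf M w)"
    using assms by (intro measure_measure_pmf_finite) (auto intro: finite_subset)
  also have "\<dots> = (\<Sum>w\<in>W \<inter> g -` {y}. pmf M w)"
    using assms by (intro sum.mono_neutral_left) (auto simp: set_pmf_eq)
  also have "\<dots> = (\<Sum>w\<in>W. if g w = y then pmf M w else 0)"
    using assms by (simp add: sum.inter_filter vimage_def Int_def conj_commute)
  finally show ?thesis .
qed

lemma sum_if_const: "(\<Sum>c\<in>T. if p then f c else 0) = (if p then sum f T else (0::real))"
  by (cases p) auto

lemma sum_triple: "finite A \<Longrightarrow> finite B \<Longrightarrow> finite C \<Longrightarrow>
  (\<Sum>w\<in>A \<times> B \<times> C. g w) = (\<Sum>a\<in>A. \<Sum>b\<in>B. \<Sum>c\<in>C. g (a, b, c))"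
  by (simp add: sum.cartesian_product)

locale fact3 =
  fixes P :: "('a \<times> 'b \<times> 'c) pmf" and A :: "'a set" and B :: "'b set" and T :: "'c set"
    and m :: "'a \<Rightarrow> 'b \<Rightarrow> real" and U :: "'c \<Rightarrow> 'a \<Rightarrow> real" and V :: "'c \<Rightarrow> 'b \<Rightarrow> real"
  assumes finA: "finite A" and finB: "finite B" and finT: "finite T"
    and supp: "set_pmf P \<subseteq> A \<times> B \<times> T"
    and pmfP: "\<And>a b c. pmf P (a, b, c) = m a b * U c a * V c b"
    and m_nn: "\<And>a b. m a b \<ge> 0"
    and U_nn: "\<And>a c. U c a \<ge> 0" and U_le1: "\<And>a c. U c a \<le> 1"
    and V_nn: "\<And>b c. V c b \<ge> 0" and V_le1: "\<And>b c. V c b \<le> 1"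
    and sumUV: "\<And>a b. a \<in> A \<Longrightarrow> b \<in> B \<Longrightarrow> (\<Sum>c\<in>T. U c a * V c b) = 1"
    and sum_m: "(\<Sum>a\<in>A. \<Sum>b\<in>B. m a b) = 1"
begin

definition mB where "mB b = (\<Sum>a\<in>A. m a b)"
definition SU where "SU c b = (\<Sum>a\<in>A. m a b * U c a)"
definition D where "D a b c = U c a * mB b / SU c b"

lemma mB_nn: "mB b \<ge> 0" unfolding mB_def by (intro sum_nonneg m_nn)
lemma SU_nn: "SU c b \<ge> 0" unfolding SU_def by (intro sum_nonneg mult_nonneg_nonneg m_nn U_nn)

lemma P_sum1: "(\<Sum>a\<in>A. \<Sum>b\<in>B. \<Sum>c\<in>T. pmf P (a, b, c)) = 1"
  using sum_pmf_eq_1[OF _ supp] finA finB finT by (simp add: sum_triple)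

lemma sum_V_SU: "(\<Sum>b\<in>B. \<Sum>c\<in>T. V c b * SU c b) = 1"
proof -
  have "(\<Sum>b\<in>B. \<Sum>c\<in>T. V c b * SU c b) = (\<Sum>b\<in>B. \<Sum>a\<in>A. m a b * (\<Sum>c\<in>T. U c a * V c b))"
    unfolding SU_def by (simp add: sum_distrib_left sum_distrib_right mult_ac sum.swap[of _ T A])
  also have "\<dots> = (\<Sum>b\<in>B. \<Sum>a\<in>A. m a b)" by (simp add: sumUV)
  also have "\<dots> = 1" using sum_m by (simp add: sum.swap[of _ B A])
  finally show ?thesis .
qed

lemma pos_facts:
  assumes "pmf P (a, b, c) > 0"
  shows "m a b > 0" "U c a > 0" "V c b > 0" "a \<in> A" "b \<in> B" "c \<in> T" "SU c b > 0" "mB b > 0"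
proof -
  have nz: "m a b * U c a * V c b \<noteq> 0" by (metis assms pmfP less_irrefl)
  show m: "m a b > 0" using nz m_nn[of a b] by (metis mult_eq_0_iff order_le_less)
  show u: "U c a > 0" using nz U_nn[of c a] by (metis mult_eq_0_iff order_le_less)
  show "V c b > 0" using nz V_nn[of c b] by (metis mult_eq_0_iff order_le_less)
  have "(a, b, c) \<in> set_pmf P" using assms by (simp add: set_pmf_eq)
  then show a: "a \<in> A" and b: "b \<in> B" and "c \<in> T" using supp by auto
  have "m a b * U c a \<le> SU c b" unfolding SU_def
    by (rule member_le_sum[OF a]) (auto intro: mult_nonneg_nonneg m_nn U_nn simp: finA)
  then show "SU c b > 0" using m u by (smt (verit) mult_pos_pos)
  have "m a b \<le> mB b" unfolding mB_def
    by (rule member_le_sum[OF a]) (auto intro: m_nn simp: finA)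
  then show "mB b > 0" using m by simp
qed

lemma marg_b: "b \<in> B \<Longrightarrow> pmf (map_pmf (\<lambda>(a, b, c). b) P) b = mB b"
proof -
  assume b: "b \<in> B"
  have "pmf (map_pmf (\<lambda>(a, b, c). b) P) b =
      (\<Sum>a\<in>A. \<Sum>b'\<in>B. \<Sum>c\<in>T. if b' = b then pmf P (a, b', c) else 0)"
    using finA finB finT supp by (simp add: pmf_map_fin[of "A \<times> B \<times> T"] sum_triple)
  also have "\<dots> = (\<Sum>a\<in>A. \<Sum>b'\<in>B. if b' = b then (\<Sum>c\<in>T. pmf P (a, b', c)) else 0)"
    by (simp add: sum_if_const)
  also have "\<dots> = (\<Sum>a\<in>A. \<Sum>c\<in>T. pmf P (a, b, c))"
    using b finB by (simp add: sum.delta)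
  also have "\<dots> = (\<Sum>a\<in>A. m a b * (\<Sum>c\<in>T. U c a * V c b))"
    by (simp add: pmfP sum_distrib_left mult_ac)
  also have "\<dots> = mB b" using b by (simp add: sumUV mB_def)
  finally show ?thesis .
qed

lemma marg_ab: "a \<in> A \<Longrightarrow> b \<in> B \<Longrightarrow> pmf (map_pmf (\<lambda>(a, b, c). (a, b)) P) (a, b) = m a b"
proof -
  assume a: "a \<in> A" and b: "b \<in> B"
  have "pmf (map_pmf (\<lambda>(a, b, c). (a, b)) P) (a, b) =
      (\<Sum>a'\<in>A. \<Sum>b'\<in>B. \<Sum>c\<in>T. if a' = a \<and> b' = b then pmf P (a', b', c) else 0)"
    using finA finB finT supp by (simp add: pmf_map_fin[of "A \<times> B \<times> T"] sum_triple)
  also have "\<dots> = (\<Sum>a'\<in>A. if a' = a then (\<Sum>b'\<in>B. if b' = b then (\<Sum>c\<in>T. pmf P (a', b', c)) else 0) else 0)"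
    by (intro sum.cong refl) (auto simp: sum_if_const)
  also have "\<dots> = (\<Sum>c\<in>T. pmf P (a, b, c))"
    using a b finA finB by (simp add: sum.delta)
  also have "\<dots> = m a b * (\<Sum>c\<in>T. U c a * V c b)"
    by (simp add: pmfP sum_distrib_left mult_ac)
  also have "\<dots> = m a b" using a b by (simp add: sumUV)
  finally show ?thesis .
qed

lemma marg_bc: "b \<in> B \<Longrightarrow> c \<in> T \<Longrightarrow> pmf (map_pmf (\<lambda>(a, b, c). (b, c)) P) (b, c) = V c b * SU c b"
proof -
  assume b: "b \<in> B" and c: "c \<in> T"
  have "pmf (map_pmf (\<lambda>(a, b, c). (b, c)) P) (b, c) =
      (\<Sum>a\<in>A. \<Sum>b'\<in>B. \<Sum>c'\<in>T. if b' = b \<and> c' = c then pmf P (a, b', c') else 0)"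
    using finA finB finT supp by (simp add: pmf_map_fin[of "A \<times> B \<times> T"] sum_triple)
  also have "\<dots> = (\<Sum>a\<in>A. \<Sum>b'\<in>B. if b' = b then (\<Sum>c'\<in>T. if c' = c then pmf P (a, b', c') else 0) else 0)"
    by (intro sum.cong refl) (auto simp: sum_if_const)
  also have "\<dots> = (\<Sum>a\<in>A. pmf P (a, b, c))"
    using b c finB finT by (simp add: sum.delta)
  also have "\<dots> = V c b * SU c b" by (simp add: pmfP SU_def sum_distrib_left mult_ac)
  finally show ?thesis .
qed

end

context fact3
begin

lemma cmi_eq: "cmi P = (\<Sum>a\<in>A. \<Sum>b\<in>B. \<Sum>c\<in>T. pmf P (a, b, c) * log 2 (D a b c))"
proof -
  define trm where "trm = (\<lambda>w. case w of (a, b, c) \<Rightarrow>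
      pmf P (a, b, c) * log 2 (pmf P (a, b, c) * pmf (map_pmf (\<lambda>(a, b, c). b) P) b
        / (pmf (map_pmf (\<lambda>(a, b, c). (a, b)) P) (a, b) * pmf (map_pmf (\<lambda>(a, b, c). (b, c)) P) (b, c))))"
  have "cmi P = sum trm (set_pmf P)" unfolding cmi_def trm_def by simp
  also have "\<dots> = sum trm (A \<times> B \<times> T)"
    using supp finA finB finT
    by (intro sum.mono_neutral_left) (auto simp: trm_def set_pmf_eq)
  also have "\<dots> = (\<Sum>w\<in>A \<times> B \<times> T. pmf P w * log 2 (D (fst w) (fst (snd w)) (snd (snd w))))"
  proof (intro sum.cong refl)
    fix w assume w: "w \<in> A \<times> B \<times> T"
    obtain a b c where wabc: "w = (a, b, c)" by (cases w) auto
    show "trm w = pmf P w * log 2 (D (fst w) (fst (snd w)) (snd (snd w)))"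
    proof (cases "pmf P (a, b, c) > 0")
      case True
      note pf = pos_facts[OF True]
      have "pmf P (a, b, c) * pmf (map_pmf (\<lambda>(a, b, c). b) P) b
        / (pmf (map_pmf (\<lambda>(a, b, c). (a, b)) P) (a, b) * pmf (map_pmf (\<lambda>(a, b, c). (b, c)) P) (b, c))
        = (m a b * U c a * V c b) * mB b / (m a b * (V c b * SU c b))"
        using pf by (simp only: marg_b[OF pf(5)] marg_ab[OF pf(4,5)] marg_bc[OF pf(5,6)] pmfP)
      also have "\<dots> = D a b c" unfolding D_def using pf by (simp add: field_simps)
      finally show ?thesis by (simp add: trm_def wabc)
    next
      case False
      then have "pmf P (a, b, c) = 0" using pmf_nonneg[of P "(a,b,c)"] by simp
      then show ?thesis by (simp add: trm_def wabc)
    qed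
  qed
  also have "\<dots> = (\<Sum>a\<in>A. \<Sum>b\<in>B. \<Sum>c\<in>T. pmf P (a, b, c) * log 2 (D a b c))"
    using finA finB finT by (simp add: sum_triple)
  finally show ?thesis .
qed

definition Q where "Q a b c = m a b * V c b * SU c b / mB b"

lemma Q_nn: "Q a b c \<ge> 0"
  unfolding Q_def by (intro divide_nonneg_nonneg mult_nonneg_nonneg m_nn V_nn SU_nn mB_nn)

lemma Q_sum: "(\<Sum>a\<in>A. \<Sum>b\<in>B. \<Sum>c\<in>T. Q a b c) \<le> 1"
proof -
  have "(\<Sum>a\<in>A. \<Sum>b\<in>B. \<Sum>c\<in>T. Q a b c) = (\<Sum>b\<in>B. \<Sum>a\<in>A. \<Sum>c\<in>T. Q a b c)"
    by (rule sum.swap)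
  also have "\<dots> = (\<Sum>b\<in>B. \<Sum>c\<in>T. \<Sum>a\<in>A. Q a b c)"
    by (intro sum.cong refl sum.swap)
  also have "\<dots> = (\<Sum>b\<in>B. \<Sum>c\<in>T. (\<Sum>a\<in>A. m a b) * (V c b * SU c b / mB b))"
  proof (intro sum.cong refl)
    fix b c
    have "\<And>a. Q a b c = m a b * (V c b * SU c b / mB b)" by (simp add: Q_def)
    then show "(\<Sum>a\<in>A. Q a b c) = (\<Sum>a\<in>A. m a b) * (V c b * SU c b / mB b)"
      by (simp only: sum_distrib_right)
  qed
  also have "\<dots> \<le> (\<Sum>b\<in>B. \<Sum>c\<in>T. V c b * SU c b)"
  proof (intro sum_mono)
    fix b c
    show "(\<Sum>a\<in>A. m a b) * (V c b * SU c b / mB b) \<le> V c b * SU c b"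
      using mB_nn[of b] V_nn[of c b] SU_nn[of c b] unfolding mB_def[symmetric]
      by (cases "mB b = 0") auto
  qed
  also have "\<dots> = 1" by (rule sum_V_SU)
  finally show ?thesis .
qed

lemma ln2_pos: "ln (2::real) > 0" by simp

lemma point_low:
  "pmf P (a, b, c) * log 2 (D a b c) \<ge> (pmf P (a, b, c) - Q a b c) / ln 2"
proof (cases "pmf P (a, b, c) > 0")
  case True
  note pf = pos_facts[OF True]
  have Dpos: "D a b c > 0" unfolding D_def using pf by simp
  have PD: "pmf P (a, b, c) / D a b c = Q a b c"
    unfolding D_def Q_def pmfP using pf by (simp add: field_simps)
  have "ln (1 / D a b c) \<le> 1 / D a b c - 1" using Dpos by (intro ln_le_minus_one) simp
  then have "- ln (D a b c) \<le> 1 / D a b c - 1" using Dpos by (simp add: ln_div)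
  then have "pmf P (a, b, c) * (- ln (D a b c)) \<le> pmf P (a, b, c) * (1 / D a b c - 1)"
    using True by (intro mult_left_mono) auto
  then have "pmf P (a, b, c) * ln (D a b c) \<ge> pmf P (a, b, c) - Q a b c"
    using PD by (simp add: algebra_simps)
  then have "(pmf P (a, b, c) - Q a b c) / ln 2 \<le> (pmf P (a, b, c) * ln (D a b c)) / ln 2"
    using ln2_pos by (intro divide_right_mono) auto
  then show ?thesis by (simp add: log_def)
next
  case False
  then have "pmf P (a, b, c) = 0" using pmf_nonneg[of P "(a,b,c)"] by simp
  then show ?thesis using Q_nn[of a b c] ln2_pos by simp
qed

lemma point_neg:
  "pmf P (a, b, c) * max 0 (- log 2 (D a b c)) \<le> Q a b c / ln 2"
proof (cases "- log 2 (D a b c) \<le> 0")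
  case True
  then show ?thesis using Q_nn[of a b c] ln2_pos by simp
next
  case False
  then have "pmf P (a, b, c) * max 0 (- log 2 (D a b c)) = - (pmf P (a, b, c) * log 2 (D a b c))" by simp
  also have "\<dots> \<le> (Q a b c - pmf P (a, b, c)) / ln 2" using point_low[of a b c] by (simp add: field_simps)
  also have "\<dots> \<le> Q a b c / ln 2" using ln2_pos by (simp add: divide_right_mono)
  finally show ?thesis .
qed

lemma sum3_mono: "(\<And>a b c. f a b c \<le> g a b c) \<Longrightarrow>
  (\<Sum>a\<in>A. \<Sum>b\<in>B. \<Sum>c\<in>T. f a b c) \<le> (\<Sum>a\<in>A. \<Sum>b\<in>B. \<Sum>c\<in>T. (g a b c :: real))"
  by (intro sum_mono) auto

lemma cmi_nonneg: "cmi P \<ge> 0"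
proof -
  have "(\<Sum>a\<in>A. \<Sum>b\<in>B. \<Sum>c\<in>T. (pmf P (a, b, c) - Q a b c) / ln 2) \<le> cmi P"
    unfolding cmi_eq by (rule sum3_mono) (rule point_low)
  moreover have "(\<Sum>a\<in>A. \<Sum>b\<in>B. \<Sum>c\<in>T. (pmf P (a, b, c) - Q a b c) / ln 2)
      = (\<Sum>a\<in>A. \<Sum>b\<in>B. \<Sum>c\<in>T. (pmf P (a, b, c) - Q a b c)) / ln 2"
    by (simp add: sum_divide_distrib)
  moreover have "(\<Sum>a\<in>A. \<Sum>b\<in>B. \<Sum>c\<in>T. (pmf P (a, b, c) - Q a b c))
      = (\<Sum>a\<in>A. \<Sum>b\<in>B. \<Sum>c\<in>T. pmf P (a, b, c)) - (\<Sum>a\<in>A. \<Sum>b\<in>B. \<Sum>c\<in>T. Q a b c)"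
    by (simp add: sum_subtractf)
  moreover have "(1 - (\<Sum>a\<in>A. \<Sum>b\<in>B. \<Sum>c\<in>T. Q a b c)) / ln 2 \<ge> 0"
    using Q_sum ln2_pos by simp
  ultimately show ?thesis using P_sum1 by simp
qed

lemma neg_part: "(\<Sum>a\<in>A. \<Sum>b\<in>B. \<Sum>c\<in>T. pmf P (a, b, c) * max 0 (- log 2 (D a b c))) \<le> 2"
proof -
  have "(\<Sum>a\<in>A. \<Sum>b\<in>B. \<Sum>c\<in>T. pmf P (a, b, c) * max 0 (- log 2 (D a b c)))
      \<le> (\<Sum>a\<in>A. \<Sum>b\<in>B. \<Sum>c\<in>T. Q a b c / ln 2)"
    by (rule sum3_mono) (rule point_neg)
  also have "\<dots> = (\<Sum>a\<in>A. \<Sum>b\<in>B. \<Sum>c\<in>T. Q a b c) / ln 2" by (simp add: sum_divide_distrib)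
  also have "\<dots> \<le> 1 / ln 2" using Q_sum ln2_pos by (simp add: divide_right_mono)
  also have "\<dots> \<le> 2" using ln2_ge_two_thirds by (simp add: field_simps)
  finally show ?thesis .
qed

lemma markov:
  assumes k: "k > 0"
  shows "(\<Sum>a\<in>A. \<Sum>b\<in>B. \<Sum>c\<in>T. pmf P (a, b, c) * of_bool (U c a * mB b > 2 powr k * SU c b))
          \<le> (cmi P + 2) / k"
proof -
  have pt: "pmf P (a, b, c) * of_bool (U c a * mB b > 2 powr k * SU c b)
      \<le> (pmf P (a, b, c) * log 2 (D a b c) + pmf P (a, b, c) * max 0 (- log 2 (D a b c))) / k" for a b c
  proof (cases "pmf P (a, b, c) > 0 \<and> U c a * mB b > 2 powr k * SU c b")
    case True
    note pf = pos_facts[OF conjunct1[OF True]]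
    have "D a b c > 2 powr k" unfolding D_def using True pf by (simp add: field_simps)
    moreover have k0: "(0::real) < 2 powr k" by simp
    ultimately have Dp: "0 < D a b c" by linarith
    have "log 2 (2 powr k) < log 2 (D a b c)"
      using k0 Dp \<open>D a b c > 2 powr k\<close> by (subst log_less_cancel_iff) auto
    then have "log 2 (D a b c) > k" by simp
    then have "pmf P (a, b, c) * log 2 (D a b c) + pmf P (a, b, c) * max 0 (- log 2 (D a b c))
        = pmf P (a, b, c) * log 2 (D a b c)" using k by simp
    moreover have "pmf P (a, b, c) * k \<le> pmf P (a, b, c) * log 2 (D a b c)"
      using \<open>log 2 (D a b c) > k\<close> True by (intro mult_left_mono) auto
    ultimately show ?thesis using True k by (simp add: field_simps)
  next
    case False
    have "0 \<le> pmf P (a, b, c) * log 2 (D a b c) + pmf P (a, b, c) * max 0 (- log 2 (D a b c))"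
      by (cases "log 2 (D a b c) \<ge> 0") (auto simp: algebra_simps)
    then have "0 \<le> (pmf P (a, b, c) * log 2 (D a b c) + pmf P (a, b, c) * max 0 (- log 2 (D a b c))) / k"
      using k by simp
    moreover have "pmf P (a, b, c) * of_bool (U c a * mB b > 2 powr k * SU c b) = 0"
      using False pmf_nonneg[of P "(a,b,c)"] by auto
    ultimately show ?thesis by linarith
  qed
  have "(\<Sum>a\<in>A. \<Sum>b\<in>B. \<Sum>c\<in>T. pmf P (a, b, c) * of_bool (U c a * mB b > 2 powr k * SU c b))
      \<le> (\<Sum>a\<in>A. \<Sum>b\<in>B. \<Sum>c\<in>T. (pmf P (a, b, c) * log 2 (D a b c) + pmf P (a, b, c) * max 0 (- log 2 (D a b c))) / k)"
    by (rule sum3_mono) (rule pt)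
  also have "\<dots> = (cmi P + (\<Sum>a\<in>A. \<Sum>b\<in>B. \<Sum>c\<in>T. pmf P (a, b, c) * max 0 (- log 2 (D a b c)))) / k"
    unfolding cmi_eq by (simp add: sum_divide_distrib sum.distrib add_divide_distrib)
  also have "\<dots> \<le> (cmi P + 2) / k" using neg_part k by (simp add: divide_right_mono)
  finally show ?thesis .
qed


definition R where "R a b c = pmf P (a, b, c) * mB b / (card T * SU c b)"

lemma R_nn: "R a b c \<ge> 0"
  unfolding R_def by (intro divide_nonneg_nonneg mult_nonneg_nonneg mB_nn SU_nn) auto

lemma R_sum: assumes TT: "T \<noteq> {}" shows "(\<Sum>a\<in>A. \<Sum>b\<in>B. \<Sum>c\<in>T. R a b c) \<le> 1"
proof -
  have "(\<Sum>a\<in>A. \<Sum>b\<in>B. \<Sum>c\<in>T. R a b c) = (\<Sum>b\<in>B. \<Sum>a\<in>A. \<Sum>c\<in>T. R a b c)"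
    by (rule sum.swap)
  also have "\<dots> = (\<Sum>b\<in>B. \<Sum>c\<in>T. \<Sum>a\<in>A. R a b c)"
    by (intro sum.cong refl sum.swap)
  also have "\<dots> = (\<Sum>b\<in>B. \<Sum>c\<in>T. (\<Sum>a\<in>A. m a b * U c a) * (V c b * mB b / (card T * SU c b)))"
  proof (intro sum.cong refl)
    fix b c
    have "\<And>a. R a b c = (m a b * U c a) * (V c b * mB b / (card T * SU c b))" by (simp add: R_def pmfP)
    then show "(\<Sum>a\<in>A. R a b c) = (\<Sum>a\<in>A. m a b * U c a) * (V c b * mB b / (card T * SU c b))"
      by (simp only: sum_distrib_right)
  qed
  also have "\<dots> \<le> (\<Sum>b\<in>B. \<Sum>c\<in>T. mB b / card T)"
  proof (intro sum_mono)
    fix b c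
    have cT: "card T > 0" using finT TT by (auto simp: card_gt_0_iff)
    show "(\<Sum>a\<in>A. m a b * U c a) * (V c b * mB b / (card T * SU c b)) \<le> mB b / card T"
    proof (cases "SU c b = 0")
      case True then show ?thesis using mB_nn[of b] by simp
    next
      case False
      then have "(\<Sum>a\<in>A. m a b * U c a) * (V c b * mB b / (card T * SU c b)) = V c b * (mB b / card T)"
        unfolding SU_def[symmetric] by (simp add: field_simps)
      also have "\<dots> \<le> 1 * (mB b / card T)"
        using V_le1[of c b] mB_nn[of b] by (intro mult_right_mono) auto
      finally show ?thesis by simp
    qed
  qed
  also have "\<dots> \<le> (\<Sum>b\<in>B. mB b)"
    using TT finT by (intro sum_mono) (simp add: card_gt_0_iff)
  also have "\<dots> = 1" unfolding mB_def using sum_m by (simp add: sum.swap[of _ B A])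
  finally show ?thesis .
qed

lemma point_up:
  assumes "T \<noteq> {}"
  shows "pmf P (a, b, c) * log 2 (D a b c) \<le> pmf P (a, b, c) * log 2 (card T) + (R a b c - pmf P (a, b, c)) / ln 2"
proof (cases "pmf P (a, b, c) > 0")
  case True
  note pf = pos_facts[OF True]
  have cT: "real (card T) > 0" using finT assms by (simp add: card_gt_0_iff)
  define x where "x = mB b / (card T * SU c b)"
  have xpos: "x > 0" unfolding x_def using pf cT by simp
  have Dpos: "D a b c > 0" unfolding D_def using pf by simp
  have "D a b c \<le> card T * x" unfolding D_def x_def using pf cT U_le1[of c a]
    by (simp add: field_simps mult_right_le_one_le)
  then have "log 2 (D a b c) \<le> log 2 (card T * x)" using Dpos by simp
  also have "\<dots> = log 2 (card T) + log 2 x" using cT xpos by (simp add: log_mult)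
  also have "log 2 x \<le> (x - 1) / ln 2"
    using ln_le_minus_one[OF xpos] ln2_pos by (simp add: log_def divide_right_mono)
  finally have "log 2 (D a b c) \<le> log 2 (card T) + (x - 1) / ln 2" by simp
  then have "pmf P (a, b, c) * log 2 (D a b c) \<le> pmf P (a, b, c) * (log 2 (card T) + (x - 1) / ln 2)"
    using True by (intro mult_left_mono) auto
  also have "\<dots> = pmf P (a, b, c) * log 2 (card T) + (R a b c - pmf P (a, b, c)) / ln 2"
    unfolding R_def x_def by (simp add: field_simps)
  finally show ?thesis .
next
  case False
  then have "pmf P (a, b, c) = 0" using pmf_nonneg[of P "(a,b,c)"] by simp
  then show ?thesis using R_nn[of a b c] ln2_pos by simp
qed

lemma cmi_upper:
  assumes "T \<noteq> {}"
  shows "cmi P \<le> log 2 (card T)"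
proof -
  have "cmi P \<le> (\<Sum>a\<in>A. \<Sum>b\<in>B. \<Sum>c\<in>T. pmf P (a, b, c) * log 2 (card T) + (R a b c - pmf P (a, b, c)) / ln 2)"
    unfolding cmi_eq by (rule sum3_mono) (rule point_up[OF assms])
  also have "\<dots> = (\<Sum>a\<in>A. \<Sum>b\<in>B. \<Sum>c\<in>T. pmf P (a, b, c)) * log 2 (card T)
      + ((\<Sum>a\<in>A. \<Sum>b\<in>B. \<Sum>c\<in>T. R a b c) - (\<Sum>a\<in>A. \<Sum>b\<in>B. \<Sum>c\<in>T. pmf P (a, b, c))) / ln 2"
  proof -
    have e1: "(\<Sum>a\<in>A. \<Sum>b\<in>B. \<Sum>c\<in>T. pmf P (a, b, c) * log 2 (card T) + (R a b c - pmf P (a, b, c)) / ln 2)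
      = (\<Sum>a\<in>A. \<Sum>b\<in>B. \<Sum>c\<in>T. pmf P (a, b, c)) * log 2 (card T)
      + (\<Sum>a\<in>A. \<Sum>b\<in>B. \<Sum>c\<in>T. (R a b c - pmf P (a, b, c))) / ln 2"
      by (simp add: sum.distrib sum_divide_distrib sum_distrib_right)
    show ?thesis unfolding e1 by (simp add: sum_subtractf)
  qed
  also have "\<dots> \<le> log 2 (card T)"
    using P_sum1 R_sum[OF assms] ln2_pos by (simp add: divide_nonpos_pos)
  finally show ?thesis .
qed

end

lemma integral_single_point:
  "measure_pmf.expectation M (\<lambda>w. if w = w0 then c else 0) = pmf M w0 * (c::real)"
  by (subst integral_measure_pmf[of "{w0}"]) (auto split: if_splits)

lemma joint_pmf: "pmf (joint \<pi> \<mu>) (x, y, t) = pmf \<mu> (x, y) * Fa \<pi> t x * Gb \<pi> t y"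
proof -
  have "pmf (joint \<pi> \<mu>) (x, y, t) =
      measure_pmf.expectation \<mu> (\<lambda>w. if w = (x, y) then pmf (run \<pi> x y) t else 0)"
    unfolding joint_def pmf_bind
  proof (intro Bochner_Integration.integral_cong refl)
    fix w :: "'a \<times> 'b" obtain x' y' where w: "w = (x', y')" by (cases w)
    show "pmf (case w of (x, y) \<Rightarrow> map_pmf (\<lambda>t. (x, y, t)) (run \<pi> x y)) (x, y, t) =
        (if w = (x, y) then pmf (run \<pi> x y) t else 0)" (is "?l = ?r")
    proof (cases "w = (x, y)")
      case True
      have inj: "inj (\<lambda>t. (x, y, t))" by (auto simp: inj_def)
      show ?thesis using True pmf_map_inj'[OF inj] by simp
    next
      case False
      then show ?thesis using w by (auto intro!: pmf_map_outside)
    qed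
  qed
  also have "\<dots> = pmf \<mu> (x, y) * pmf (run \<pi> x y) t" by (rule integral_single_point)
  finally show ?thesis by (simp add: run_factor mult_ac)
qed

lemma set_joint: "set_pmf \<mu> \<subseteq> X \<times> Y \<Longrightarrow> set_pmf (joint \<pi> \<mu>) \<subseteq> X \<times> Y \<times> leaves \<pi>"
  unfolding joint_def using set_run_leaves by (fastforce simp: set_bind_pmf)

definition swap3 :: "'a \<times> 'b \<times> 'c \<Rightarrow> 'b \<times> 'a \<times> 'c" where "swap3 = (\<lambda>(x, y, t). (y, x, t))"

lemma swap3_inj: "inj swap3" by (auto simp: inj_def swap3_def)

lemma joint2_pmf: "pmf (map_pmf (\<lambda>(x, y, t). (y, x, t)) (joint \<pi> \<mu>)) (y, x, t) = pmf \<mu> (x, y) * Gb \<pi> t y * Fa \<pi> t x"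
proof -
  have "pmf (map_pmf swap3 (joint \<pi> \<mu>)) (swap3 (x, y, t)) = pmf (joint \<pi> \<mu>) (x, y, t)"
    by (rule pmf_map_inj'[OF swap3_inj])
  then show ?thesis by (simp add: swap3_def joint_pmf mult_ac)
qed

lemma sum_mu: "finite X \<Longrightarrow> finite Y \<Longrightarrow> set_pmf \<mu> \<subseteq> X \<times> Y \<Longrightarrow> (\<Sum>x\<in>X. \<Sum>y\<in>Y. pmf \<mu> (x, y)) = 1"
  using sum_pmf_eq_1[of "X \<times> Y" \<mu>] by (simp add: sum.cartesian_product)

lemma info_facts:
  fixes \<pi> :: "('x, 'y, 'z) proto" and \<mu> :: "('x \<times> 'y) pmf"
  assumes fX: "finite X" and fY: "finite Y" and supp: "set_pmf \<mu> \<subseteq> X \<times> Y"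
  shows "IC \<pi> \<mu> \<ge> 0" "IC \<pi> \<mu> \<le> 2 * log 2 (card (leaves \<pi>))"
    "k > 0 \<Longrightarrow> (\<Sum>x\<in>X. \<Sum>y\<in>Y. \<Sum>t\<in>leaves \<pi>. pmf \<mu> (x, y) * Fa \<pi> t x * Gb \<pi> t y *
        of_bool (\<not> (Fa \<pi> t x * (\<Sum>x'\<in>X. pmf \<mu> (x', y)) \<le> 2 powr k * (\<Sum>x'\<in>X. pmf \<mu> (x', y) * Fa \<pi> t x')
               \<and> Gb \<pi> t y * (\<Sum>y'\<in>Y. pmf \<mu> (x, y')) \<le> 2 powr k * (\<Sum>y'\<in>Y. pmf \<mu> (x, y') * Gb \<pi> t y'))))
      \<le> (IC \<pi> \<mu> + 4) / k"
proof -
  let ?L = "leaves \<pi>"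
  interpret J1: fact3 "joint \<pi> \<mu>" X Y ?L "\<lambda>x y. pmf \<mu> (x, y)" "\<lambda>t x. Fa \<pi> t x" "\<lambda>t y. Gb \<pi> t y"
    by unfold_locales (auto simp: fX fY finite_leaves set_joint[OF supp] joint_pmf Fa_nonneg Fa_le1
        Gb_nonneg Gb_le1 sum_FaGb sum_mu[OF fX fY supp])
  interpret J2: fact3 "map_pmf (\<lambda>(x, y, t). (y, x, t)) (joint \<pi> \<mu>)" Y X ?L "\<lambda>y x. pmf \<mu> (x, y)"
      "\<lambda>t y. Gb \<pi> t y" "\<lambda>t x. Fa \<pi> t x"
  proof unfold_locales
    show "set_pmf (map_pmf (\<lambda>(x, y, t). (y, x, t)) (joint \<pi> \<mu>)) \<subseteq> Y \<times> X \<times> ?L"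
      using set_joint[OF supp, of \<pi>] by auto
    show "(\<Sum>a\<in>Y. \<Sum>b\<in>X. pmf \<mu> (b, a)) = 1"
      using sum_mu[OF fX fY supp] by (simp add: sum.swap[of _ Y X])
  qed (auto simp: fX fY finite_leaves joint2_pmf Fa_nonneg Fa_le1 Gb_nonneg Gb_le1 sum_FaGb mult_ac)
  have IC: "IC \<pi> \<mu> = cmi (joint \<pi> \<mu>) + cmi (map_pmf (\<lambda>(x, y, t). (y, x, t)) (joint \<pi> \<mu>))"
    by (simp add: IC_def)
  show "IC \<pi> \<mu> \<ge> 0" using J1.cmi_nonneg J2.cmi_nonneg IC by simp
  show "IC \<pi> \<mu> \<le> 2 * log 2 (card ?L)" using J1.cmi_upper J2.cmi_upper IC leaves_ne by fastforce
  assume k: "k > 0"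
  note m1 = J1.markov[OF k]
  note m2 = J2.markov[OF k]
  have s2: "(\<Sum>x\<in>X. \<Sum>y\<in>Y. \<Sum>t\<in>?L. pmf \<mu> (x, y) * Fa \<pi> t x * Gb \<pi> t y *
        of_bool (Gb \<pi> t y * (\<Sum>y'\<in>Y. pmf \<mu> (x, y')) > 2 powr k * (\<Sum>y'\<in>Y. pmf \<mu> (x, y') * Gb \<pi> t y')))
     = (\<Sum>a\<in>Y. \<Sum>b\<in>X. \<Sum>c\<in>?L. pmf (map_pmf (\<lambda>(x, y, t). (y, x, t)) (joint \<pi> \<mu>)) (a, b, c) *
        of_bool (Gb \<pi> c a * J2.mB b > 2 powr k * J2.SU c b))"
    by (subst sum.swap) (simp add: joint2_pmf J2.mB_def J2.SU_def mult_ac)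
  have s1: "(\<Sum>x\<in>X. \<Sum>y\<in>Y. \<Sum>t\<in>?L. pmf \<mu> (x, y) * Fa \<pi> t x * Gb \<pi> t y *
        of_bool (Fa \<pi> t x * (\<Sum>x'\<in>X. pmf \<mu> (x', y)) > 2 powr k * (\<Sum>x'\<in>X. pmf \<mu> (x', y) * Fa \<pi> t x')))
     = (\<Sum>a\<in>X. \<Sum>b\<in>Y. \<Sum>c\<in>?L. pmf (joint \<pi> \<mu>) (a, b, c) *
        of_bool (Fa \<pi> c a * J1.mB b > 2 powr k * J1.SU c b))"
    by (simp add: joint_pmf J1.mB_def J1.SU_def mult_ac)
  have "(\<Sum>x\<in>X. \<Sum>y\<in>Y. \<Sum>t\<in>?L. pmf \<mu> (x, y) * Fa \<pi> t x * Gb \<pi> t y *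
        of_bool (\<not> (Fa \<pi> t x * (\<Sum>x'\<in>X. pmf \<mu> (x', y)) \<le> 2 powr k * (\<Sum>x'\<in>X. pmf \<mu> (x', y) * Fa \<pi> t x')
               \<and> Gb \<pi> t y * (\<Sum>y'\<in>Y. pmf \<mu> (x, y')) \<le> 2 powr k * (\<Sum>y'\<in>Y. pmf \<mu> (x, y') * Gb \<pi> t y'))))
      \<le> (\<Sum>x\<in>X. \<Sum>y\<in>Y. \<Sum>t\<in>?L. pmf \<mu> (x, y) * Fa \<pi> t x * Gb \<pi> t y *
        of_bool (Fa \<pi> t x * (\<Sum>x'\<in>X. pmf \<mu> (x', y)) > 2 powr k * (\<Sum>x'\<in>X. pmf \<mu> (x', y) * Fa \<pi> t x')))
       + (\<Sum>x\<in>X. \<Sum>y\<in>Y. \<Sum>t\<in>?L. pmf \<mu> (x, y) * Fa \<pi> t x * Gb \<pi> t y *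
        of_bool (Gb \<pi> t y * (\<Sum>y'\<in>Y. pmf \<mu> (x, y')) > 2 powr k * (\<Sum>y'\<in>Y. pmf \<mu> (x, y') * Gb \<pi> t y')))"
    unfolding sum.distrib[symmetric]
    by (intro sum_mono) (auto simp: algebra_simps intro!: mult_nonneg_nonneg Fa_nonneg Gb_nonneg)
  also have "\<dots> \<le> (cmi (joint \<pi> \<mu>) + 2) / k + (cmi (map_pmf (\<lambda>(x, y, t). (y, x, t)) (joint \<pi> \<mu>)) + 2) / k"
    unfolding s1 s2 using m1 m2 by (intro add_mono) auto
  also have "\<dots> = (IC \<pi> \<mu> + 4) / k" unfolding IC using k by (simp add: field_simps)
  finally show "(\<Sum>x\<in>X. \<Sum>y\<in>Y. \<Sum>t\<in>leaves \<pi>. pmf \<mu> (x, y) * Fa \<pi> t x * Gb \<pi> t y *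
        of_bool (\<not> (Fa \<pi> t x * (\<Sum>x'\<in>X. pmf \<mu> (x', y)) \<le> 2 powr k * (\<Sum>x'\<in>X. pmf \<mu> (x', y) * Fa \<pi> t x')
               \<and> Gb \<pi> t y * (\<Sum>y'\<in>Y. pmf \<mu> (x, y')) \<le> 2 powr k * (\<Sum>y'\<in>Y. pmf \<mu> (x, y') * Gb \<pi> t y'))))
      \<le> (IC \<pi> \<mu> + 4) / k" .
qed

definition cnt :: "nat \<Rightarrow> real \<Rightarrow> real" where
  "cnt n \<theta> = real (card {i\<in>{1..n}. real i / real n \<le> \<theta>}) / real n"

lemma E_grid:
  assumes n: "n > 0"
  shows "measure_pmf.expectation (pmf_of_set ({1..n} \<times> {1..n}))
     (\<lambda>g. of_bool (real (fst g) / real n \<le> \<theta>1 \<and> real (snd g) / real n \<le> \<theta>2)) = cnt n \<theta>1 * cnt n \<theta>2"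
proof -
  have ne: "{1..n} \<times> {1..n} \<noteq> {}" using n by auto
  have "measure_pmf.expectation (pmf_of_set ({1..n} \<times> {1..n}))
     (\<lambda>g. of_bool (real (fst g) / real n \<le> \<theta>1 \<and> real (snd g) / real n \<le> \<theta>2))
     = (\<Sum>g\<in>{1..n} \<times> {1..n}. of_bool (real (fst g) / real n \<le> \<theta>1 \<and> real (snd g) / real n \<le> \<theta>2)) / card ({1..n} \<times> {1..n})"
    using ne by (simp add: integral_pmf_of_set)
  also have "(\<Sum>g\<in>{1..n} \<times> {1..n}. of_bool (real (fst g) / real n \<le> \<theta>1 \<and> real (snd g) / real n \<le> \<theta>2) :: real)
     = (\<Sum>i\<in>{1..n}. of_bool (real i / real n \<le> \<theta>1)) * (\<Sum>j\<in>{1..n}. of_bool (real j / real n \<le> \<theta>2))"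
  proof -
    have "(\<Sum>g\<in>{1..n} \<times> {1..n}. of_bool (real (fst g) / real n \<le> \<theta>1 \<and> real (snd g) / real n \<le> \<theta>2) :: real)
       = (\<Sum>(i, j)\<in>{1..n} \<times> {1..n}. of_bool (real i / real n \<le> \<theta>1) * of_bool (real j / real n \<le> \<theta>2))"
      by (intro sum.cong refl) auto
    also have "\<dots> = (\<Sum>i\<in>{1..n}. \<Sum>j\<in>{1..n}. of_bool (real i / real n \<le> \<theta>1) * of_bool (real j / real n \<le> \<theta>2))"
      by (simp only: sum.cartesian_product)
    also have "\<dots> = (\<Sum>i\<in>{1..n}. of_bool (real i / real n \<le> \<theta>1)) * (\<Sum>j\<in>{1..n}. of_bool (real j / real n \<le> \<theta>2))"
      by (simp only: sum_product)
    finally show ?thesis .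
  qed
  also have "\<dots> = real (card {i\<in>{1..n}. real i / real n \<le> \<theta>1}) * real (card {i\<in>{1..n}. real i / real n \<le> \<theta>2})"
    by (simp add: Int_def conj_commute)
  finally show ?thesis by (simp add: cnt_def card_cartesian_product)
qed

lemma cnt_nn: "cnt n \<theta> \<ge> 0" by (simp add: cnt_def)

lemma cnt_le1: "cnt n \<theta> \<le> 1"
proof -
  have "card {i\<in>{1..n}. real i / real n \<le> \<theta>} \<le> card {1..n}" by (intro card_mono) auto
  then show ?thesis by (cases "n = 0") (auto simp: cnt_def)
qed

lemma cnt_upper: assumes "\<theta> \<ge> 0" shows "cnt n \<theta> \<le> \<theta>"
proof (cases "n = 0")
  case True then show ?thesis using assms by (simp add: cnt_def)
next
  case False
  then have n: "real n > 0" by simp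
  have "{i\<in>{1..n}. real i / real n \<le> \<theta>} \<subseteq> {1..nat \<lfloor>real n * \<theta>\<rfloor>}"
  proof
    fix i assume "i \<in> {i\<in>{1..n}. real i / real n \<le> \<theta>}"
    then have i: "i \<ge> 1" "real i \<le> real n * \<theta>" using n by (auto simp: field_simps)
    then have "int i \<le> \<lfloor>real n * \<theta>\<rfloor>" by (simp add: le_floor_iff)
    then show "i \<in> {1..nat \<lfloor>real n * \<theta>\<rfloor>}" using i by (auto simp: le_nat_iff)
  qed
  then have "card {i\<in>{1..n}. real i / real n \<le> \<theta>} \<le> card {1..nat \<lfloor>real n * \<theta>\<rfloor>}"
    by (intro card_mono) auto
  then have "card {i\<in>{1..n}. real i / real n \<le> \<theta>} \<le> nat \<lfloor>real n * \<theta>\<rfloor>" by simp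
  moreover have fl: "\<lfloor>real n * \<theta>\<rfloor> \<ge> 0" using assms n by simp
  moreover have "real (nat \<lfloor>real n * \<theta>\<rfloor>) = real_of_int \<lfloor>real n * \<theta>\<rfloor>" using fl by simp
  moreover have "real_of_int \<lfloor>real n * \<theta>\<rfloor> \<le> real n * \<theta>" by (rule of_int_floor_le)
  ultimately have "real (card {i\<in>{1..n}. real i / real n \<le> \<theta>}) \<le> real n * \<theta>"
    by (metis of_nat_mono order_trans)
  then show ?thesis using n by (simp add: cnt_def field_simps)
qed

lemma cnt_lower: assumes "\<theta> \<le> 1" "n > 0" shows "cnt n \<theta> \<ge> \<theta> - 1 / n"
proof (cases "\<theta> < 0")
  case True then show ?thesis using cnt_nn[of n \<theta>] by (smt (verit) of_nat_0_le_iff divide_nonneg_nonneg)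
next
  case False
  have n: "real n > 0" using assms by simp
  have "{1..nat \<lfloor>real n * \<theta>\<rfloor>} \<subseteq> {i\<in>{1..n}. real i / real n \<le> \<theta>}"
  proof
    fix i assume i: "i \<in> {1..nat \<lfloor>real n * \<theta>\<rfloor>}"
    then have "real i \<le> \<lfloor>real n * \<theta>\<rfloor>" by auto
    then have ri: "real i \<le> real n * \<theta>" by linarith
    moreover have "real n * \<theta> \<le> real n" using assms n by (simp add: mult_left_le)
    ultimately have "real i \<le> real n" by linarith
    then have "i \<le> n" by simp
    then show "i \<in> {i\<in>{1..n}. real i / real n \<le> \<theta>}" using i n ri by (auto simp: field_simps)
  qed
  then have "card {1..nat \<lfloor>real n * \<theta>\<rfloor>} \<le> card {i\<in>{1..n}. real i / real n \<le> \<theta>}"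
    by (intro card_mono) auto
  then have "nat \<lfloor>real n * \<theta>\<rfloor> \<le> card {i\<in>{1..n}. real i / real n \<le> \<theta>}" by simp
  moreover have "real n * \<theta> - 1 \<le> real (nat \<lfloor>real n * \<theta>\<rfloor>)" using False n by linarith
  ultimately have "real n * \<theta> - 1 \<le> real (card {i\<in>{1..n}. real i / real n \<le> \<theta>})" by linarith
  then have "(real n * \<theta> - 1) / n \<le> real (card {i\<in>{1..n}. real i / real n \<le> \<theta>}) / n"
    using n by (intro divide_right_mono) auto
  moreover have "(real n * \<theta> - 1) / n = \<theta> - 1 / n" using n by (simp add: field_simps)
  ultimately show ?thesis by (simp add: cnt_def)
qed

lemma cnt_mult_lower:
  assumes "0 \<le> a" "a \<le> 1" "0 \<le> b" "b \<le> 1" "n > 0"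
  shows "cnt n a * cnt n b \<ge> a * b - 2 / n"
proof -
  have ca: "cnt n a \<ge> a - 1/n" and cb: "cnt n b \<ge> b - 1/n" using cnt_lower assms by auto
  have h1: "cnt n a * cnt n b \<ge> (a - 1/n) * cnt n b"
    using ca cnt_nn[of n b] by (intro mult_right_mono) auto
  have h2: "(a - 1/n) * cnt n b = a * cnt n b - cnt n b / n" by (simp add: algebra_simps)
  have h3: "cnt n b / n \<le> 1 / n" using cnt_le1[of n b] by (intro divide_right_mono) auto
  have h4: "a * cnt n b \<ge> a * (b - 1/n)" using cb assms by (intro mult_left_mono) auto
  have h5: "a * (b - 1/n) = a * b - a / n" by (simp add: algebra_simps)
  have h6: "a / n \<le> 1 / n" using assms by (intro divide_right_mono) auto
  show ?thesis using h1 h2 h3 h4 h5 h6 by linarith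
qed

lemma E_Pi_one:
  assumes "finite L" "t \<in> L"
  shows "measure_pmf.expectation (Pi_pmf L d (\<lambda>_. Pg)) (\<lambda>r. \<phi> (r t)) = measure_pmf.expectation Pg (\<phi> :: _ \<Rightarrow> real)"
proof -
  have "measure_pmf.expectation (Pi_pmf L d (\<lambda>_. Pg)) (\<lambda>r. \<phi> (r t))
      = measure_pmf.expectation (map_pmf (\<lambda>r. r t) (Pi_pmf L d (\<lambda>_. Pg))) \<phi>" by simp
  also have "map_pmf (\<lambda>r. r t) (Pi_pmf L d (\<lambda>_. Pg)) = Pg" using Pi_pmf_component[OF assms(1), of t d "\<lambda>_. Pg"] assms(2) by simp
  finally show ?thesis .
qed

lemma E_Pi_two:
  assumes fin: "finite L" and t: "t \<in> L" and t': "t' \<in> L" and ne: "t \<noteq> t'"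
    and fg: "finite (set_pmf Pg)"
    and nn: "\<And>v. \<phi> v \<ge> 0" "\<And>v. \<psi> v \<ge> 0"
  shows "measure_pmf.expectation (Pi_pmf L d (\<lambda>_. Pg)) (\<lambda>r. \<phi> (r t) * \<psi> (r t'))
     = measure_pmf.expectation Pg \<phi> * measure_pmf.expectation Pg (\<psi> :: _ \<Rightarrow> real)"
proof -
  define F where "F = (\<lambda>s v. if s = t then \<phi> v else if s = t' then \<psi> v else 1)"
  have L: "L = insert t (insert t' (L - {t, t'}))" using t t' by auto
  have prodF: "(\<Prod>s\<in>L. F s (r s)) = \<phi> (r t) * \<psi> (r t')" for r
  proof -
    have "(\<Prod>s\<in>L. F s (r s)) = F t (r t) * (F t' (r t') * (\<Prod>s\<in>L - {t, t'}. F s (r s)))"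
      using fin ne by (subst L) (simp add: prod.insert_remove insert_Diff_if)
    also have "(\<Prod>s\<in>L - {t, t'}. F s (r s)) = 1" by (intro prod.neutral) (auto simp: F_def)
    finally show ?thesis using ne by (simp add: F_def)
  qed
  have prodE: "(\<Prod>s\<in>L. measure_pmf.expectation Pg (F s)) = measure_pmf.expectation Pg \<phi> * measure_pmf.expectation Pg \<psi>"
  proof -
    have "(\<Prod>s\<in>L. measure_pmf.expectation Pg (F s)) =
        measure_pmf.expectation Pg (F t) * (measure_pmf.expectation Pg (F t') * (\<Prod>s\<in>L - {t, t'}. measure_pmf.expectation Pg (F s)))"
      using fin ne by (subst L) (simp add: prod.insert_remove insert_Diff_if)
    also have "(\<Prod>s\<in>L - {t, t'}. measure_pmf.expectation Pg (F s)) = 1"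
      by (intro prod.neutral) (auto simp: F_def)
    finally show ?thesis using ne by (simp add: F_def)
  qed
  have "measure_pmf.expectation (Pi_pmf L d (\<lambda>_. Pg)) (\<lambda>r. \<Prod>s\<in>L. F s (r s)) = (\<Prod>s\<in>L. measure_pmf.expectation Pg (F s))"
    by (rule expectation_prod_Pi_pmf[OF fin]) (auto simp: F_def nn integrable_measure_pmf_finite[OF fg])
  then show ?thesis using prodF prodE by simp
qed

lemma prob_fin:
  assumes "finite W" "set_pmf M \<subseteq> W"
  shows "measure_pmf.prob M A = (\<Sum>w\<in>W. if w \<in> A then pmf M w else 0)"
proof -
  have "measure_pmf.prob M A = measure M (A \<inter> set_pmf M)" by (simp add: measure_Int_set_pmf)
  also have "\<dots> = (\<Sum>w\<in>A \<inter> set_pmf M. pmf M w)"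
    using assms by (intro measure_measure_pmf_finite) (auto intro: finite_subset)
  also have "\<dots> = (\<Sum>w\<in>W \<inter> A. pmf M w)"
    using assms by (intro sum.mono_neutral_left) (auto simp: set_pmf_eq)
  also have "\<dots> = (\<Sum>w\<in>W. if w \<in> A then pmf M w else 0)"
    using assms by (simp add: sum.inter_restrict)
  finally show ?thesis .
qed

lemma finite_rects: "finite X \<Longrightarrow> finite Y \<Longrightarrow> finite (rects X Y)"
proof -
  assume "finite X" "finite Y"
  moreover have "rects X Y = (\<lambda>(A, B). A \<times> B) ` (Pow X \<times> Pow Y)" by (auto simp: rects_def)
  ultimately show ?thesis by simp
qed

lemma bonferroni:
  assumes "finite T"
  shows "of_bool (\<exists>t\<in>T. e t) \<ge> (\<Sum>t\<in>T. of_bool (e t)) - (\<Sum>t\<in>T. \<Sum>t'\<in>T - {t}. of_bool (e t) * of_bool (e t') :: real)"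
proof -
  define A where "A = {t\<in>T. e t}"
  have fA: "finite A" using assms by (simp add: A_def)
  have s1: "(\<Sum>t\<in>T. of_bool (e t) :: real) = card A"
    using assms by (simp add: A_def Int_def conj_commute)
  have "(\<Sum>t\<in>T. \<Sum>t'\<in>T - {t}. of_bool (e t) * of_bool (e t') :: real) = (\<Sum>t\<in>T. of_bool (e t) * real (card (A - {t})))"
  proof (intro sum.cong refl)
    fix t assume "t \<in> T"
    have "(\<Sum>t'\<in>T - {t}. of_bool (e t) * of_bool (e t') :: real) = of_bool (e t) * (\<Sum>t'\<in>T - {t}. of_bool (e t'))"
      by (simp add: sum_distrib_left del: sum_of_bool_eq)
    also have "(\<Sum>t'\<in>T - {t}. of_bool (e t') :: real) = real (card ((T - {t}) \<inter> {t'. e t'}))"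
      using assms by simp
    also have "(T - {t}) \<inter> {t'. e t'} = A - {t}" by (auto simp: A_def)
    finally show "(\<Sum>t'\<in>T - {t}. of_bool (e t) * of_bool (e t') :: real) = of_bool (e t) * real (card (A - {t}))" .
  qed
  also have "\<dots> = (\<Sum>t\<in>T. if e t then real (card (A - {t})) else 0)"
    by (intro sum.cong refl) auto
  also have "\<dots> = (\<Sum>t\<in>A. real (card (A - {t})))"
    unfolding A_def by (rule sum.inter_filter[OF assms, symmetric])
  also have "\<dots> = (\<Sum>t\<in>A. real (card A - 1))"
    using fA by (intro sum.cong refl) simp
  also have "\<dots> = real (card A) * real (card A - 1)" by simp
  finally have s2: "(\<Sum>t\<in>T. \<Sum>t'\<in>T - {t}. of_bool (e t) * of_bool (e t') :: real) = real (card A) * real (card A - 1)" .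
  have ex: "(\<exists>t\<in>T. e t) \<longleftrightarrow> card A > 0" using fA by (auto simp: A_def card_gt_0_iff)
  show ?thesis
  proof (cases "card A")
    case 0 then show ?thesis using s1 s2 ex by simp
  next
    case (Suc m)
    have "real (Suc m) - real (Suc m) * real m = 1 - real m * real m" by (simp add: algebra_simps)
    moreover have "real m * real m \<ge> 0" by simp
    ultimately have "real (Suc m) - real (Suc m) * real m \<le> 1" by linarith
    then show ?thesis using s1 s2 ex Suc by simp
  qed
qed

locale lp =
  fixes X :: "'x set" and Y :: "'y set" and Z :: "'z set" and S :: "('x \<times> 'y) set" and f :: "'x \<Rightarrow> 'y \<Rightarrow> 'z"
    and \<mu> :: "('x \<times> 'y) pmf" and \<pi> :: "('x, 'y, 'z) proto" and \<epsilon> \<delta> k :: real and n :: nat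
  assumes fX: "finite X" and fY: "finite Y" and fZ: "finite Z" and Zne: "Z \<noteq> {}"
    and SXY: "S \<subseteq> X \<times> Y" and fS: "\<And>x y. (x, y) \<in> S \<Longrightarrow> f x y \<in> Z"
    and supp: "set_pmf \<mu> \<subseteq> X \<times> Y" and outs: "outputs \<pi> \<subseteq> Z"
    and err: "err_dist S f \<pi> \<mu> \<le> \<epsilon>" and eps0: "\<epsilon> \<ge> 0"
    and dpos: "\<delta> > 0" and dhalf: "\<delta> < 1/2" and kpos: "k > 0"
    and lossb: "(IC \<pi> \<mu> + 4) / k \<le> \<delta> / 2"
    and npos: "n > 0"
    and nbig: "4 * real (card (leaves \<pi>)) \<le> real n * (\<delta> / (2 powr k)^2) * \<delta>"
begin

abbreviation "L \<equiv> leaves \<pi>"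
definition "K = 2 powr k"
definition "rho = \<delta> / K^2"
definition "mX x = (\<Sum>y\<in>Y. pmf \<mu> (x, y))"
definition "mY y = (\<Sum>x\<in>X. pmf \<mu> (x, y))"
definition "SA t y = (\<Sum>x\<in>X. pmf \<mu> (x, y) * Fa \<pi> t x)"
definition "SB t x = (\<Sum>y\<in>Y. pmf \<mu> (x, y) * Gb \<pi> t y)"
definition "aA t x = rho * Fa \<pi> t x"
definition "bA t x = min 1 (K * SB t x / mX x)"
definition "bB t y = Gb \<pi> t y"
definition "aB t y = rho * min 1 (K * SA t y / mY y)"
definition "accA t g x \<longleftrightarrow> real (fst g) / real n \<le> aA t x \<and> real (snd g) / real n \<le> bA t x"
definition "accB t g y \<longleftrightarrow> real (snd g) / real n \<le> bB t y \<and> real (fst g) / real n \<le> aB t y"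
definition "Pg = pmf_of_set ({1..n} \<times> {1..n})"
definition "RP = Pi_pmf L (1, 1) (\<lambda>_. Pg)"
definition "SAz r z = {x\<in>X. \<exists>t\<in>L. snd t = z \<and> accA t (r t) x}"
definition "SBz r z = {y\<in>Y. \<exists>t\<in>L. snd t = z \<and> accB t (r t) y}"
definition "Rect r z = SAz r z \<times> SBz r z"
definition "p R z = (measure_pmf.expectation RP (\<lambda>r. of_bool (Rect r z = R)) / card Z :: real)"
definition "eta = rho * (1 + \<delta>) / card Z"
definition "EA t x = (measure_pmf.expectation Pg (\<lambda>g. of_bool (accA t g x)) :: real)"
definition "EB t y = (measure_pmf.expectation Pg (\<lambda>g. of_bool (accB t g y)) :: real)"
definition "Eb t x y = (measure_pmf.expectation Pg (\<lambda>g. of_bool (accA t g x \<and> accB t g y)) :: real)"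
definition "good t x y \<longleftrightarrow> Fa \<pi> t x * mY y \<le> K * SA t y \<and> Gb \<pi> t y * mX x \<le> K * SB t x"

lemma K_ge1: "K \<ge> 1" unfolding K_def using kpos by (intro ge_one_powr_ge_zero) auto
lemma K_pos: "K > 0" using K_ge1 by simp
lemma rho_pos: "rho > 0" unfolding rho_def using dpos K_pos by simp
lemma rho_le: "rho \<le> \<delta>"
proof -
  have "K^2 \<ge> 1" using K_ge1 by simp
  then show ?thesis unfolding rho_def using dpos by (simp add: divide_le_eq field_simps)
qed
lemma rho_le1: "rho \<le> 1" using rho_le dhalf by simp
lemma rhoK2: "rho * K^2 = \<delta>" unfolding rho_def using K_pos by simp

lemma fin_G: "finite ({1..n} \<times> {1..n})" by simp
lemma G_ne: "{1..n} \<times> {1..n} \<noteq> {}" using npos by auto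
lemma set_Pg: "set_pmf Pg = {1..n} \<times> {1..n}" unfolding Pg_def using G_ne by simp
lemma fin_Pg: "finite (set_pmf Pg)" using set_Pg by simp
lemma fin_RP: "finite (set_pmf RP)"
  unfolding RP_def by (simp add: set_Pi_pmf finite_leaves) (intro finite_PiE_dflt finite_leaves fin_Pg)
lemma int_RP: "integrable (measure_pmf RP) (h :: _ \<Rightarrow> real)"
  by (rule integrable_measure_pmf_finite[OF fin_RP])

lemma mX_nn: "mX x \<ge> 0" unfolding mX_def by (simp add: sum_nonneg)
lemma mY_nn: "mY y \<ge> 0" unfolding mY_def by (simp add: sum_nonneg)
lemma SA_nn: "SA t y \<ge> 0" unfolding SA_def by (simp add: sum_nonneg Fa_nonneg)
lemma SB_nn: "SB t x \<ge> 0" unfolding SB_def by (simp add: sum_nonneg Gb_nonneg)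

lemma aA_rng: "0 \<le> aA t x" "aA t x \<le> 1"
  unfolding aA_def using rho_pos rho_le1 Fa_nonneg[of \<pi> t x] Fa_le1[of \<pi> t x]
  by (auto intro: mult_le_one)
lemma aB_rng: "0 \<le> aB t y" "aB t y \<le> 1"
  unfolding aB_def using rho_pos rho_le1 K_pos SA_nn[of t y] mY_nn[of y]
  by (auto intro!: mult_le_one)
lemma bA_rng: "0 \<le> bA t x" "bA t x \<le> 1"
  unfolding bA_def using K_pos SB_nn[of t x] mX_nn[of x] by auto
lemma bB_rng: "0 \<le> bB t y" "bB t y \<le> 1"
  unfolding bB_def using Gb_nonneg[of \<pi> t y] Gb_le1[of \<pi> t y] by auto

lemma EA_eq: "EA t x = cnt n (aA t x) * cnt n (bA t x)"
  unfolding EA_def Pg_def accA_def by (rule E_grid[OF npos])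
lemma EB_eq: "EB t y = cnt n (aB t y) * cnt n (bB t y)"
proof -
  have "EB t y = measure_pmf.expectation (pmf_of_set ({1..n} \<times> {1..n}))
     (\<lambda>g. of_bool (real (fst g) / real n \<le> aB t y \<and> real (snd g) / real n \<le> bB t y))"
    unfolding EB_def Pg_def accB_def by (simp add: conj_commute)
  also have "\<dots> = cnt n (aB t y) * cnt n (bB t y)" by (rule E_grid[OF npos])
  finally show ?thesis .
qed
lemma Eb_eq: "Eb t x y = cnt n (min (aA t x) (aB t y)) * cnt n (min (bA t x) (bB t y))"
proof -
  have "Eb t x y = measure_pmf.expectation (pmf_of_set ({1..n} \<times> {1..n}))
     (\<lambda>g. of_bool (real (fst g) / real n \<le> min (aA t x) (aB t y) \<and> real (snd g) / real n \<le> min (bA t x) (bB t y)))"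
    unfolding Eb_def Pg_def accA_def accB_def by (intro arg_cong[where f="measure_pmf.expectation _"] ext) auto
  also have "\<dots> = cnt n (min (aA t x) (aB t y)) * cnt n (min (bA t x) (bB t y))" by (rule E_grid[OF npos])
  finally show ?thesis .
qed

lemma EA_le: "EA t x \<le> aA t x * bA t x"
  unfolding EA_eq using aA_rng[of t x] bA_rng[of t x] cnt_nn
  by (intro mult_mono cnt_upper) auto
lemma EB_le: "EB t y \<le> aB t y * bB t y"
  unfolding EB_eq using aB_rng[of t y] bB_rng[of t y] cnt_nn
  by (intro mult_mono cnt_upper) auto
lemma EA_nn: "EA t x \<ge> 0" by (simp add: EA_eq cnt_nn)
lemma EB_nn: "EB t y \<ge> 0" by (simp add: EB_eq cnt_nn)
lemma Eb_nn: "Eb t x y \<ge> 0" by (simp add: Eb_eq cnt_nn)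
lemma Eb_le: "Eb t x y \<le> rho * Fa \<pi> t x * Gb \<pi> t y"
proof -
  have "Eb t x y \<le> min (aA t x) (aB t y) * min (bA t x) (bB t y)"
    unfolding Eb_eq using aA_rng[of t x] bA_rng[of t x] aB_rng[of t y] bB_rng[of t y] cnt_nn
    by (intro mult_mono cnt_upper) auto
  also have "\<dots> \<le> aA t x * bB t y"
    using aA_rng[of t x] bA_rng[of t x] aB_rng[of t y] bB_rng[of t y]
    by (intro mult_mono) auto
  finally show ?thesis by (simp add: aA_def bB_def mult_ac)
qed


lemma pos_mu: assumes "pmf \<mu> (x, y) > 0" shows "x \<in> X" "y \<in> Y" "mX x > 0" "mY y > 0"
proof -
  have "(x, y) \<in> set_pmf \<mu>" using assms by (simp add: set_pmf_eq)
  then have xy: "(x, y) \<in> X \<times> Y" using supp by auto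
  then show "x \<in> X" "y \<in> Y" by auto
  have "pmf \<mu> (x, y) \<le> mX x" unfolding mX_def using xy fY by (intro member_le_sum) auto
  then show "mX x > 0" using assms by simp
  have "pmf \<mu> (x, y) \<le> mY y" unfolding mY_def using xy fX by (intro member_le_sum) auto
  then show "mY y > 0" using assms by simp
qed

lemma sum_FaSB: "(\<Sum>t\<in>L. Fa \<pi> t x * SB t x) = mX x"
proof -
  have "(\<Sum>t\<in>L. Fa \<pi> t x * SB t x) = (\<Sum>y\<in>Y. pmf \<mu> (x, y) * (\<Sum>t\<in>L. Fa \<pi> t x * Gb \<pi> t y))"
    unfolding SB_def by (simp add: sum_distrib_left sum.swap[of _ L Y] mult_ac)
  then show ?thesis by (simp add: sum_FaGb mX_def)
qed

lemma sum_SAGb: "(\<Sum>t\<in>L. SA t y * Gb \<pi> t y) = mY y"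
proof -
  have "(\<Sum>t\<in>L. SA t y * Gb \<pi> t y) = (\<Sum>x\<in>X. pmf \<mu> (x, y) * (\<Sum>t\<in>L. Fa \<pi> t x * Gb \<pi> t y))"
    unfolding SA_def by (simp add: sum_distrib_left sum_distrib_right sum.swap[of _ L X] mult_ac)
  then show ?thesis by (simp add: sum_FaGb mY_def)
qed

lemma sum_EA: "(\<Sum>t\<in>L. EA t x) \<le> rho * K"
proof (cases "mX x = 0")
  case True
  have "EA t x \<le> 0" for t using EA_le[of t x] True by (simp add: bA_def)
  then have "(\<Sum>t\<in>L. EA t x) \<le> 0" by (intro sum_nonpos) auto
  then show ?thesis using rho_pos K_pos by (smt (verit) mult_pos_pos)
next
  case False
  then have mx: "mX x > 0" using mX_nn[of x] by simp
  have "EA t x \<le> rho * Fa \<pi> t x * (K * SB t x / mX x)" for t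
  proof -
    have "EA t x \<le> aA t x * bA t x" by (rule EA_le)
    also have "\<dots> \<le> rho * Fa \<pi> t x * (K * SB t x / mX x)"
      unfolding aA_def bA_def using rho_pos Fa_nonneg[of \<pi> t x] by (intro mult_left_mono) auto
    finally show ?thesis .
  qed
  then have "(\<Sum>t\<in>L. EA t x) \<le> (\<Sum>t\<in>L. rho * K / mX x * (Fa \<pi> t x * SB t x))"
    by (intro sum_mono) (simp add: field_simps)
  also have "\<dots> = rho * K / mX x * mX x" by (simp only: sum_distrib_left[symmetric] sum_FaSB)
  also have "\<dots> = rho * K" using mx by simp
  finally show ?thesis .
qed

lemma sum_EB: "(\<Sum>t\<in>L. EB t y) \<le> rho * K"
proof (cases "mY y = 0")
  case True
  have "EB t y \<le> 0" for t using EB_le[of t y] True by (simp add: aB_def)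
  then have "(\<Sum>t\<in>L. EB t y) \<le> 0" by (intro sum_nonpos) auto
  then show ?thesis using rho_pos K_pos by (smt (verit) mult_pos_pos)
next
  case False
  then have my: "mY y > 0" using mY_nn[of y] by simp
  have "EB t y \<le> rho * (K * SA t y / mY y) * Gb \<pi> t y" for t
  proof -
    have "EB t y \<le> aB t y * bB t y" by (rule EB_le)
    also have "\<dots> \<le> rho * (K * SA t y / mY y) * Gb \<pi> t y"
      unfolding aB_def bB_def using rho_pos Gb_nonneg[of \<pi> t y] by (intro mult_right_mono mult_left_mono) auto
    finally show ?thesis .
  qed
  then have "(\<Sum>t\<in>L. EB t y) \<le> (\<Sum>t\<in>L. rho * K / mY y * (SA t y * Gb \<pi> t y))"
    by (intro sum_mono) (simp add: field_simps)
  also have "\<dots> = rho * K / mY y * mY y" by (simp only: sum_distrib_left[symmetric] sum_SAGb)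
  also have "\<dots> = rho * K" using my by simp
  finally show ?thesis .
qed

lemma sum_Eb: "(\<Sum>t\<in>L. Eb t x y) \<le> rho"
proof -
  have "(\<Sum>t\<in>L. Eb t x y) \<le> (\<Sum>t\<in>L. rho * (Fa \<pi> t x * Gb \<pi> t y))"
    by (intro sum_mono) (simp add: Eb_le mult.assoc[symmetric])
  also have "\<dots> = rho" by (simp add: sum_distrib_left[symmetric] sum_FaGb)
  finally show ?thesis .
qed

lemma Eb_lower:
  assumes "pmf \<mu> (x, y) > 0"
  shows "Eb t x y \<ge> rho * Fa \<pi> t x * Gb \<pi> t y * of_bool (good t x y) - 2 / n"
proof -
  note pm = pos_mu[OF assms]
  have "Eb t x y \<ge> min (aA t x) (aB t y) * min (bA t x) (bB t y) - 2 / n"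
    unfolding Eb_eq using aA_rng[of t x] bA_rng[of t x] aB_rng[of t y] bB_rng[of t y] npos
    by (intro cnt_mult_lower) auto
  moreover have "min (aA t x) (aB t y) * min (bA t x) (bB t y) \<ge> rho * Fa \<pi> t x * Gb \<pi> t y * of_bool (good t x y)"
  proof (cases "good t x y")
    case True
    then have g1: "Fa \<pi> t x \<le> K * SA t y / mY y" and g2: "Gb \<pi> t y \<le> K * SB t x / mX x"
      using pm by (auto simp: good_def field_simps)
    have "aA t x \<le> aB t y" unfolding aA_def aB_def using g1 Fa_le1[of \<pi> t x] rho_pos
      by (intro mult_left_mono) auto
    moreover have "bB t y \<le> bA t x" unfolding bA_def bB_def using g2 Gb_le1[of \<pi> t y] by auto
    ultimately show ?thesis using True by (simp add: aA_def bB_def min_def mult_ac)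
  next
    case False
    then show ?thesis using aA_rng[of t x] bA_rng[of t x] aB_rng[of t y] bB_rng[of t y] by simp
  qed
  ultimately show ?thesis by linarith
qed

lemma errpt_eq: "err_pt S f \<pi> x y = (\<Sum>t\<in>L. Fa \<pi> t x * Gb \<pi> t y * of_bool ((x, y) \<in> S \<and> snd t \<noteq> f x y))"
proof (cases "(x, y) \<in> S")
  case True
  have "err_pt S f \<pi> x y = measure_pmf.prob (run \<pi> x y) {t. snd t \<noteq> f x y}"
    using True by (simp add: err_pt_def)
  also have "\<dots> = (\<Sum>t\<in>L. if t \<in> {t. snd t \<noteq> f x y} then pmf (run \<pi> x y) t else 0)"
    by (rule prob_fin[OF finite_leaves set_run_leaves])
  finally show ?thesis using True by (simp add: run_factor of_bool_def if_distrib cong: if_cong)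
next
  case False
  then show ?thesis by (simp add: err_pt_def)
qed

lemma E_one_RP: "t \<in> L \<Longrightarrow> measure_pmf.expectation RP (\<lambda>r. \<phi> (r t)) = (measure_pmf.expectation Pg \<phi> :: real)"
  unfolding RP_def by (rule E_Pi_one[OF finite_leaves])

lemma E_two_RP: "t \<in> L \<Longrightarrow> t' \<in> L \<Longrightarrow> t \<noteq> t' \<Longrightarrow> (\<And>v. \<phi> v \<ge> 0) \<Longrightarrow> (\<And>v. \<psi> v \<ge> 0) \<Longrightarrow>
   measure_pmf.expectation RP (\<lambda>r. \<phi> (r t) * \<psi> (r t')) = measure_pmf.expectation Pg \<phi> * (measure_pmf.expectation Pg \<psi> :: real)"
  unfolding RP_def by (rule E_Pi_two[OF finite_leaves _ _ _ fin_Pg])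

lemma E_sum_RP: "finite I \<Longrightarrow> measure_pmf.expectation RP (\<lambda>r. \<Sum>i\<in>I. h i r) = (\<Sum>i\<in>I. measure_pmf.expectation RP (h i) :: real)"
  by (rule Bochner_Integration.integral_sum) (rule int_RP)

end

context lp
begin

lemma snd_leaf: "t \<in> L \<Longrightarrow> snd t \<in> Z" using leaves_outputs outs by blast

lemma sum_z_delta: "t \<in> L \<Longrightarrow> (\<Sum>z\<in>Z. of_bool (snd t = z) :: real) = 1"
proof -
  assume t: "t \<in> L"
  have "Z \<inter> {z. snd t = z} = {snd t}" using snd_leaf[OF t] by auto
  then show ?thesis using fZ by simp
qed

lemma cov_pt:
  "(\<Sum>z\<in>Z. of_bool (x \<in> SAz r z \<and> y \<in> SBz r z) :: real)
     \<le> (\<Sum>t\<in>L. \<Sum>t'\<in>L. of_bool (accA t (r t) x) * of_bool (accB t' (r t') y))"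
proof -
  define h where "h t = (of_bool (accA t (r t) x) * (\<Sum>t'\<in>L. of_bool (accB t' (r t') y)) :: real)" for t
  have h_nn: "h t \<ge> 0" for t unfolding h_def by (intro mult_nonneg_nonneg sum_nonneg) auto
  have each: "of_bool (x \<in> SAz r z \<and> y \<in> SBz r z) \<le> (\<Sum>t\<in>L. of_bool (snd t = z) * h t)" for z
  proof (cases "x \<in> SAz r z \<and> y \<in> SBz r z")
    case True
    then obtain t0 t1 where t0: "t0 \<in> L" "snd t0 = z" "accA t0 (r t0) x" and t1: "t1 \<in> L" "accB t1 (r t1) y"
      by (auto simp: SAz_def SBz_def)
    have "(1::real) \<le> (\<Sum>t'\<in>L. of_bool (accB t' (r t') y))"
      using member_le_sum[of t1 L "\<lambda>t'. of_bool (accB t' (r t') y) :: real"] t1 finite_leaves[of \<pi>]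
      by (simp del: sum_of_bool_eq)
    then have "1 \<le> of_bool (snd t0 = z) * h t0" using t0 by (simp add: h_def)
    also have "\<dots> \<le> (\<Sum>t\<in>L. of_bool (snd t = z) * h t)"
      using t0 finite_leaves[of \<pi>] h_nn by (intro member_le_sum) auto
    finally show ?thesis using True by simp
  next
    case False
    then have "of_bool (x \<in> SAz r z \<and> y \<in> SBz r z) = (0::real)" by simp
    moreover have "0 \<le> (\<Sum>t\<in>L. of_bool (snd t = z) * h t)" by (intro sum_nonneg) (simp add: h_nn)
    ultimately show ?thesis by linarith
  qed
  have "(\<Sum>z\<in>Z. of_bool (x \<in> SAz r z \<and> y \<in> SBz r z) :: real) \<le> (\<Sum>z\<in>Z. \<Sum>t\<in>L. of_bool (snd t = z) * h t)"
    by (intro sum_mono each)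
  also have "\<dots> = (\<Sum>t\<in>L. (\<Sum>z\<in>Z. of_bool (snd t = z)) * h t)"
    by (simp add: sum.swap[of _ Z L] sum_distrib_right)
  also have "\<dots> = (\<Sum>t\<in>L. h t)" by (intro sum.cong refl) (simp add: sum_z_delta)
  also have "\<dots> = (\<Sum>t\<in>L. \<Sum>t'\<in>L. of_bool (accA t (r t) x) * of_bool (accB t' (r t') y))"
    by (simp add: h_def sum_distrib_left)
  finally show ?thesis .
qed

lemma E_pair:
  assumes "t \<in> L" "t' \<in> L"
  shows "measure_pmf.expectation RP (\<lambda>r. of_bool (accA t (r t) x) * of_bool (accB t' (r t') y))
      \<le> of_bool (t = t') * Eb t x y + EA t x * EB t' y"
proof (cases "t = t'")
  case True
  have "measure_pmf.expectation RP (\<lambda>r. of_bool (accA t (r t) x) * of_bool (accB t' (r t') y))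
     = (measure_pmf.expectation RP (\<lambda>r. (\<lambda>g. of_bool (accA t g x \<and> accB t g y)) (r t)) :: real)"
    using True by (simp only: of_bool_conj)
  also have "\<dots> = Eb t x y" unfolding Eb_def by (rule E_one_RP[OF assms(1)])
  finally show ?thesis using True EA_nn[of t x] EB_nn[of t' y] by simp
next
  case False
  have "(measure_pmf.expectation RP (\<lambda>r. (\<lambda>g. of_bool (accA t g x)) (r t) * (\<lambda>g. of_bool (accB t' g y)) (r t')) :: real)
      = EA t x * EB t' y"
    unfolding EA_def EB_def by (rule E_two_RP[OF assms False]) auto
  then show ?thesis using False by simp
qed

lemma cov_upper:
  "(\<Sum>z\<in>Z. measure_pmf.expectation RP (\<lambda>r. of_bool (x \<in> SAz r z \<and> y \<in> SBz r z)) :: real) \<le> rho + (rho * K)^2"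
proof -
  have "(\<Sum>z\<in>Z. measure_pmf.expectation RP (\<lambda>r. of_bool (x \<in> SAz r z \<and> y \<in> SBz r z)))
      = (measure_pmf.expectation RP (\<lambda>r. \<Sum>z\<in>Z. of_bool (x \<in> SAz r z \<and> y \<in> SBz r z)) :: real)"
    using E_sum_RP[OF fZ, of "\<lambda>z r. of_bool (x \<in> SAz r z \<and> y \<in> SBz r z)"] by simp
  also have "\<dots> \<le> measure_pmf.expectation RP (\<lambda>r. \<Sum>t\<in>L. \<Sum>t'\<in>L. of_bool (accA t (r t) x) * of_bool (accB t' (r t') y))"
    by (intro integral_mono int_RP cov_pt)
  also have "\<dots> = (\<Sum>t\<in>L. measure_pmf.expectation RP (\<lambda>r. \<Sum>t'\<in>L. of_bool (accA t (r t) x) * of_bool (accB t' (r t') y)))"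
    by (rule E_sum_RP[OF finite_leaves])
  also have "\<dots> = (\<Sum>t\<in>L. \<Sum>t'\<in>L. measure_pmf.expectation RP (\<lambda>r. of_bool (accA t (r t) x) * of_bool (accB t' (r t') y)))"
    by (intro sum.cong refl E_sum_RP[OF finite_leaves])
  also have "\<dots> \<le> (\<Sum>t\<in>L. \<Sum>t'\<in>L. of_bool (t = t') * Eb t x y + EA t x * EB t' y)"
    by (intro sum_mono E_pair)
  also have "\<dots> = (\<Sum>t\<in>L. Eb t x y) + (\<Sum>t\<in>L. EA t x) * (\<Sum>t'\<in>L. EB t' y)"
  proof -
    have d: "(\<Sum>t'\<in>L. of_bool (t = t') * Eb t x y) = Eb t x y" if "t \<in> L" for t
    proof -
      have "(\<Sum>t'\<in>L. of_bool (t = t') * Eb t x y) = (\<Sum>t'\<in>L. if t = t' then Eb t x y else 0)"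
        by (intro sum.cong refl) auto
      also have "\<dots> = Eb t x y" using that finite_leaves[of \<pi>] by (simp add: sum.delta)
      finally show ?thesis .
    qed
    show ?thesis by (simp add: sum.distrib sum_product d)
  qed
  also have "\<dots> \<le> rho + (rho * K) * (rho * K)"
    using sum_Eb sum_EA sum_EB rho_pos K_pos by (intro add_mono mult_mono) (auto intro: sum_nonneg EA_nn EB_nn)
  finally show ?thesis by (simp add: power2_eq_square)
qed


definition "bad x y = (\<Sum>t\<in>L. Fa \<pi> t x * Gb \<pi> t y * of_bool (\<not> good t x y))"

lemma Cr_ge:
  assumes "x \<in> X" "y \<in> Y"
  shows "(if (x, y) \<in> S then of_bool (x \<in> SAz r (f x y) \<and> y \<in> SBz r (f x y))
          else (\<Sum>z\<in>Z. of_bool (x \<in> SAz r z \<and> y \<in> SBz r z)) :: real)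
     \<ge> of_bool (\<exists>t\<in>{t\<in>L. (x, y) \<in> S \<longrightarrow> snd t = f x y}. accA t (r t) x \<and> accB t (r t) y)"
proof (cases "\<exists>t\<in>{t\<in>L. (x, y) \<in> S \<longrightarrow> snd t = f x y}. accA t (r t) x \<and> accB t (r t) y")
  case True
  then obtain t where t: "t \<in> L" "(x, y) \<in> S \<longrightarrow> snd t = f x y" "accA t (r t) x" "accB t (r t) y" by auto
  have mem: "x \<in> SAz r (snd t) \<and> y \<in> SBz r (snd t)" using t assms by (auto simp: SAz_def SBz_def)
  show ?thesis
  proof (cases "(x, y) \<in> S")
    case True
    then show ?thesis using mem t by simp
  next
    case False
    have "(1::real) = of_bool (x \<in> SAz r (snd t) \<and> y \<in> SBz r (snd t))" using mem by simp
    also have "\<dots> \<le> (\<Sum>z\<in>Z. of_bool (x \<in> SAz r z \<and> y \<in> SBz r z))"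
      using snd_leaf[OF t(1)] fZ by (intro member_le_sum) auto
    finally show ?thesis using False True by simp
  qed
next
  case False
  then have "of_bool (\<exists>t\<in>{t\<in>L. (x, y) \<in> S \<longrightarrow> snd t = f x y}. accA t (r t) x \<and> accB t (r t) y) = (0::real)"
    by simp
  moreover have "(if (x, y) \<in> S then of_bool (x \<in> SAz r (f x y) \<and> y \<in> SBz r (f x y))
          else (\<Sum>z\<in>Z. of_bool (x \<in> SAz r z \<and> y \<in> SBz r z)) :: real) \<ge> 0"
    by (auto intro: sum_nonneg simp del: sum_of_bool_eq)
  ultimately show ?thesis by linarith
qed

lemma cov_lower:
  assumes pos: "pmf \<mu> (x, y) > 0"
  shows "(if (x, y) \<in> S then measure_pmf.expectation RP (\<lambda>r. of_bool (x \<in> SAz r (f x y) \<and> y \<in> SBz r (f x y)))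
          else (\<Sum>z\<in>Z. measure_pmf.expectation RP (\<lambda>r. of_bool (x \<in> SAz r z \<and> y \<in> SBz r z))) :: real)
     \<ge> rho * (1 - err_pt S f \<pi> x y - bad x y) - 2 * card L / n - rho^2"
proof -
  note pm = pos_mu[OF pos]
  define Lc where "Lc = {t\<in>L. (x, y) \<in> S \<longrightarrow> snd t = f x y}"
  have fLc: "finite Lc" unfolding Lc_def by (simp add: finite_leaves)
  have LcL: "Lc \<subseteq> L" unfolding Lc_def by auto
  define e where "e t r \<longleftrightarrow> accA t (r t) x \<and> accB t (r t) y" for t and r :: "bool list \<times> 'z \<Rightarrow> nat \<times> nat"
  define Cr where "Cr r = (if (x, y) \<in> S then of_bool (x \<in> SAz r (f x y) \<and> y \<in> SBz r (f x y))
          else (\<Sum>z\<in>Z. of_bool (x \<in> SAz r z \<and> y \<in> SBz r z)) :: real)" for r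
  have LHS: "(if (x, y) \<in> S then measure_pmf.expectation RP (\<lambda>r. of_bool (x \<in> SAz r (f x y) \<and> y \<in> SBz r (f x y)))
          else (\<Sum>z\<in>Z. measure_pmf.expectation RP (\<lambda>r. of_bool (x \<in> SAz r z \<and> y \<in> SBz r z))) :: real)
      = measure_pmf.expectation RP Cr"
    unfolding Cr_def by (cases "(x, y) \<in> S") (simp_all add: E_sum_RP fZ del: sum_of_bool_eq)
  have Ee: "measure_pmf.expectation RP (\<lambda>r. of_bool (e t r)) = Eb t x y" if "t \<in> L" for t
  proof -
    have "measure_pmf.expectation RP (\<lambda>r. of_bool (e t r)) =
        (measure_pmf.expectation RP (\<lambda>r. (\<lambda>g. of_bool (accA t g x \<and> accB t g y)) (r t)) :: real)"
      by (simp add: e_def)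
    also have "\<dots> = Eb t x y" unfolding Eb_def by (rule E_one_RP[OF that])
    finally show ?thesis .
  qed
  have Eee: "measure_pmf.expectation RP (\<lambda>r. of_bool (e t r) * of_bool (e t' r)) = Eb t x y * Eb t' x y"
    if "t \<in> L" "t' \<in> L" "t \<noteq> t'" for t t'
  proof -
    have "measure_pmf.expectation RP (\<lambda>r. of_bool (e t r) * of_bool (e t' r)) =
        (measure_pmf.expectation RP (\<lambda>r. (\<lambda>g. of_bool (accA t g x \<and> accB t g y)) (r t) * (\<lambda>g. of_bool (accA t' g x \<and> accB t' g y)) (r t')) :: real)"
      by (simp add: e_def)
    also have "\<dots> = Eb t x y * Eb t' x y" unfolding Eb_def by (rule E_two_RP[OF that]) auto
    finally show ?thesis .
  qed
  have "measure_pmf.expectation RP Cr \<ge> measure_pmf.expectation RP (\<lambda>r. of_bool (\<exists>t\<in>Lc. e t r))"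
    unfolding Cr_def Lc_def e_def by (intro integral_mono int_RP Cr_ge pm)
  moreover have "(measure_pmf.expectation RP (\<lambda>r. of_bool (\<exists>t\<in>Lc. e t r)) :: real)
      \<ge> measure_pmf.expectation RP (\<lambda>r. (\<Sum>t\<in>Lc. of_bool (e t r)) - (\<Sum>t\<in>Lc. \<Sum>t'\<in>Lc - {t}. of_bool (e t r) * of_bool (e t' r)))"
    by (intro integral_mono int_RP bonferroni fLc)
  moreover have "(measure_pmf.expectation RP (\<lambda>r. (\<Sum>t\<in>Lc. of_bool (e t r)) - (\<Sum>t\<in>Lc. \<Sum>t'\<in>Lc - {t}. of_bool (e t r) * of_bool (e t' r))) :: real)
      = (\<Sum>t\<in>Lc. Eb t x y) - (\<Sum>t\<in>Lc. \<Sum>t'\<in>Lc - {t}. Eb t x y * Eb t' x y)"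
  proof -
    have "(measure_pmf.expectation RP (\<lambda>r. (\<Sum>t\<in>Lc. of_bool (e t r)) - (\<Sum>t\<in>Lc. \<Sum>t'\<in>Lc - {t}. of_bool (e t r) * of_bool (e t' r))) :: real)
      = measure_pmf.expectation RP (\<lambda>r. \<Sum>t\<in>Lc. of_bool (e t r)) - measure_pmf.expectation RP (\<lambda>r. \<Sum>t\<in>Lc. \<Sum>t'\<in>Lc - {t}. of_bool (e t r) * of_bool (e t' r))"
      by (rule Bochner_Integration.integral_diff) (rule int_RP)+
    also have "(measure_pmf.expectation RP (\<lambda>r. \<Sum>t\<in>Lc. of_bool (e t r)) :: real) = (\<Sum>t\<in>Lc. Eb t x y)"
      using LcL by (simp add: E_sum_RP fLc Ee subsetD del: sum_of_bool_eq)
    also have "(measure_pmf.expectation RP (\<lambda>r. \<Sum>t\<in>Lc. \<Sum>t'\<in>Lc - {t}. of_bool (e t r) * of_bool (e t' r)) :: real)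
        = (\<Sum>t\<in>Lc. \<Sum>t'\<in>Lc - {t}. Eb t x y * Eb t' x y)"
    proof -
      have "(measure_pmf.expectation RP (\<lambda>r. \<Sum>t\<in>Lc. \<Sum>t'\<in>Lc - {t}. of_bool (e t r) * of_bool (e t' r)) :: real)
          = (\<Sum>t\<in>Lc. measure_pmf.expectation RP (\<lambda>r. \<Sum>t'\<in>Lc - {t}. of_bool (e t r) * of_bool (e t' r)))"
        by (rule E_sum_RP[OF fLc])
      also have "\<dots> = (\<Sum>t\<in>Lc. \<Sum>t'\<in>Lc - {t}. measure_pmf.expectation RP (\<lambda>r. of_bool (e t r) * of_bool (e t' r)))"
        using fLc by (intro sum.cong refl E_sum_RP) auto
      also have "\<dots> = (\<Sum>t\<in>Lc. \<Sum>t'\<in>Lc - {t}. Eb t x y * Eb t' x y)"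
        using LcL by (intro sum.cong refl Eee) auto
      finally show ?thesis .
    qed
    finally show ?thesis .
  qed
  moreover have "(\<Sum>t\<in>Lc. \<Sum>t'\<in>Lc - {t}. Eb t x y * Eb t' x y) \<le> rho^2"
  proof -
    have "(\<Sum>t\<in>Lc. \<Sum>t'\<in>Lc - {t}. Eb t x y * Eb t' x y) \<le> (\<Sum>t\<in>L. \<Sum>t'\<in>L. Eb t x y * Eb t' x y)"
    proof -
      have "(\<Sum>t\<in>Lc. \<Sum>t'\<in>Lc - {t}. Eb t x y * Eb t' x y) \<le> (\<Sum>t\<in>Lc. \<Sum>t'\<in>L. Eb t x y * Eb t' x y)"
        using LcL by (intro sum_mono sum_mono2 finite_leaves) (auto intro: mult_nonneg_nonneg Eb_nn)
      also have "\<dots> \<le> (\<Sum>t\<in>L. \<Sum>t'\<in>L. Eb t x y * Eb t' x y)"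
        using LcL by (intro sum_mono2 finite_leaves) (auto intro!: sum_nonneg mult_nonneg_nonneg Eb_nn)
      finally show ?thesis .
    qed
    also have "\<dots> = (\<Sum>t\<in>L. Eb t x y) * (\<Sum>t\<in>L. Eb t x y)" by (simp add: sum_product)
    also have "\<dots> \<le> rho * rho" using sum_Eb[of x y] rho_pos by (intro mult_mono) (auto intro: sum_nonneg Eb_nn)
    finally show ?thesis by (simp add: power2_eq_square)
  qed
  moreover have "(\<Sum>t\<in>Lc. Eb t x y) \<ge> rho * (1 - err_pt S f \<pi> x y - bad x y) - 2 * card L / n"
  proof -
    have "(\<Sum>t\<in>Lc. Eb t x y) \<ge> (\<Sum>t\<in>Lc. rho * Fa \<pi> t x * Gb \<pi> t y * of_bool (good t x y) - 2 / n)"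
      by (intro sum_mono Eb_lower[OF pos])
    moreover have "(\<Sum>t\<in>Lc. rho * Fa \<pi> t x * Gb \<pi> t y * of_bool (good t x y) - 2 / n)
        = rho * (\<Sum>t\<in>Lc. Fa \<pi> t x * Gb \<pi> t y * of_bool (good t x y)) - 2 * card Lc / n"
      by (simp add: sum_subtractf sum_distrib_left mult_ac)
    moreover have "card Lc \<le> card L" using LcL by (intro card_mono finite_leaves)
    then have "2 * real (card Lc) / n \<le> 2 * card L / n" by (simp add: divide_right_mono)
    moreover have "(\<Sum>t\<in>Lc. Fa \<pi> t x * Gb \<pi> t y * of_bool (good t x y)) \<ge> 1 - err_pt S f \<pi> x y - bad x y"
    proof -
      have "(\<Sum>t\<in>Lc. Fa \<pi> t x * Gb \<pi> t y * of_bool (good t x y))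
          = (\<Sum>t\<in>L. if (x, y) \<in> S \<longrightarrow> snd t = f x y then Fa \<pi> t x * Gb \<pi> t y * of_bool (good t x y) else 0)"
        unfolding Lc_def by (rule sum.inter_filter[OF finite_leaves])
      also have "\<dots> \<ge> (\<Sum>t\<in>L. Fa \<pi> t x * Gb \<pi> t y * (1 - of_bool ((x, y) \<in> S \<and> snd t \<noteq> f x y) - of_bool (\<not> good t x y)))"
        by (intro sum_mono) (auto simp: Fa_nonneg Gb_nonneg mult_nonneg_nonneg)
      also have "(\<Sum>t\<in>L. Fa \<pi> t x * Gb \<pi> t y * (1 - of_bool ((x, y) \<in> S \<and> snd t \<noteq> f x y) - of_bool (\<not> good t x y)))
          = 1 - err_pt S f \<pi> x y - bad x y"
        by (simp add: algebra_simps sum_subtractf sum.distrib sum_FaGb errpt_eq bad_def)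
      finally show ?thesis .
    qed
    then have "rho * (\<Sum>t\<in>Lc. Fa \<pi> t x * Gb \<pi> t y * of_bool (good t x y)) \<ge> rho * (1 - err_pt S f \<pi> x y - bad x y)"
      using rho_pos by (intro mult_left_mono) auto
    ultimately show ?thesis by linarith
  qed
  ultimately show ?thesis unfolding LHS by linarith
qed

end

context lp
begin

lemma Rect_in: "Rect r z \<in> rects X Y"
  unfolding Rect_def rects_def SAz_def SBz_def by blast

lemma p_nn: "p R z \<ge> 0"
  unfolding p_def by (intro divide_nonneg_nonneg Bochner_Integration.integral_nonneg) auto

lemma sum_R_ind: "finite A \<Longrightarrow> (\<Sum>R\<in>A. of_bool (Rect r z = R) :: real) = of_bool (Rect r z \<in> A)"
proof -
  assume fA: "finite A"
  have "A \<inter> {R. Rect r z = R} = (if Rect r z \<in> A then {Rect r z} else {})" by auto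
  then show ?thesis using fA by simp
qed

lemma p_cov: "(\<Sum>R\<in>{R\<in>rects X Y. xy \<in> R}. p R z) =
   (measure_pmf.expectation RP (\<lambda>r. of_bool (fst xy \<in> SAz r z \<and> snd xy \<in> SBz r z)) :: real) / card Z"
proof -
  have fin: "finite {R\<in>rects X Y. xy \<in> R}" using finite_rects[OF fX fY] by simp
  have "(\<Sum>R\<in>{R\<in>rects X Y. xy \<in> R}. p R z) =
     (\<Sum>R\<in>{R\<in>rects X Y. xy \<in> R}. measure_pmf.expectation RP (\<lambda>r. of_bool (Rect r z = R))) / card Z"
    unfolding p_def by (simp add: sum_divide_distrib)
  also have "(\<Sum>R\<in>{R\<in>rects X Y. xy \<in> R}. measure_pmf.expectation RP (\<lambda>r. of_bool (Rect r z = R)) :: real)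
      = measure_pmf.expectation RP (\<lambda>r. \<Sum>R\<in>{R\<in>rects X Y. xy \<in> R}. of_bool (Rect r z = R))"
    by (rule E_sum_RP[OF fin, symmetric])
  also have "(\<lambda>r. \<Sum>R\<in>{R\<in>rects X Y. xy \<in> R}. of_bool (Rect r z = R) :: real) =
      (\<lambda>r. of_bool (fst xy \<in> SAz r z \<and> snd xy \<in> SBz r z))"
  proof
    fix r
    show "(\<Sum>R\<in>{R\<in>rects X Y. xy \<in> R}. of_bool (Rect r z = R) :: real) = of_bool (fst xy \<in> SAz r z \<and> snd xy \<in> SBz r z)"
      using sum_R_ind[OF fin, of r z] Rect_in[of r z] by (cases xy) (simp add: Rect_def)
  qed
  finally show ?thesis .
qed

lemma p_total: "(\<Sum>R\<in>rects X Y. \<Sum>z\<in>Z. p R z) = 1"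
proof -
  have fin: "finite (rects X Y)" using finite_rects[OF fX fY] .
  have "(\<Sum>R\<in>rects X Y. \<Sum>z\<in>Z. p R z) = (\<Sum>z\<in>Z. \<Sum>R\<in>rects X Y. p R z)" by (rule sum.swap)
  also have "\<dots> = (\<Sum>z\<in>Z. 1 / card Z)"
  proof (intro sum.cong refl)
    fix z
    have "(\<Sum>R\<in>rects X Y. p R z) = (\<Sum>R\<in>rects X Y. measure_pmf.expectation RP (\<lambda>r. of_bool (Rect r z = R))) / card Z"
      unfolding p_def by (simp add: sum_divide_distrib)
    also have "(\<Sum>R\<in>rects X Y. measure_pmf.expectation RP (\<lambda>r. of_bool (Rect r z = R)) :: real)
      = measure_pmf.expectation RP (\<lambda>r. \<Sum>R\<in>rects X Y. of_bool (Rect r z = R))"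
      by (rule E_sum_RP[OF fin, symmetric])
    also have "(\<lambda>r. \<Sum>R\<in>rects X Y. of_bool (Rect r z = R) :: real) = (\<lambda>r. 1)"
      using sum_R_ind[OF fin] Rect_in by auto
    finally show "(\<Sum>R\<in>rects X Y. p R z) = 1 / card Z" by simp
  qed
  also have "\<dots> = 1" using fZ Zne by simp
  finally show ?thesis .
qed

lemma eta_pos: "eta > 0" unfolding eta_def using rho_pos dpos fZ Zne by (simp add: card_gt_0_iff)

lemma cond_ii: "xy \<in> X \<times> Y \<Longrightarrow> (\<Sum>z\<in>Z. \<Sum>R\<in>{R\<in>rects X Y. xy \<in> R}. p R z) \<le> eta"
proof -
  have "(\<Sum>z\<in>Z. \<Sum>R\<in>{R\<in>rects X Y. xy \<in> R}. p R z)
      = (\<Sum>z\<in>Z. measure_pmf.expectation RP (\<lambda>r. of_bool (fst xy \<in> SAz r z \<and> snd xy \<in> SBz r z)) :: real) / card Z"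
    by (simp add: p_cov sum_divide_distrib)
  also have "\<dots> \<le> (rho + (rho * K)^2) / card Z"
    by (intro divide_right_mono cov_upper) auto
  also have "(rho * K)^2 = rho * \<delta>" using rhoK2 by (simp add: power2_eq_square mult_ac)
  then have "(rho + (rho * K)^2) / card Z = eta" unfolding eta_def by (simp add: algebra_simps)
  finally show ?thesis .
qed

end

context lp
begin

lemma err_dist_sum: "err_dist S f \<pi> \<mu> = (\<Sum>xy\<in>X \<times> Y. pmf \<mu> xy * err_pt S f \<pi> (fst xy) (snd xy))"
  unfolding err_dist_def
  by (subst integral_measure_pmf[of "X \<times> Y"]) (use fX fY supp in \<open>auto simp: case_prod_beta\<close>)

lemma sum_mu1: "(\<Sum>xy\<in>X \<times> Y. pmf \<mu> xy) = 1"
  using sum_pmf_eq_1[of "X \<times> Y" \<mu>] fX fY supp by simp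

lemma loss_sum: "(\<Sum>xy\<in>X \<times> Y. pmf \<mu> xy * bad (fst xy) (snd xy)) \<le> \<delta> / 2"
proof -
  have "(\<Sum>xy\<in>X \<times> Y. pmf \<mu> xy * bad (fst xy) (snd xy)) =
     (\<Sum>x\<in>X. \<Sum>y\<in>Y. \<Sum>t\<in>leaves \<pi>. pmf \<mu> (x, y) * Fa \<pi> t x * Gb \<pi> t y *
        of_bool (\<not> (Fa \<pi> t x * (\<Sum>x'\<in>X. pmf \<mu> (x', y)) \<le> 2 powr k * (\<Sum>x'\<in>X. pmf \<mu> (x', y) * Fa \<pi> t x')
               \<and> Gb \<pi> t y * (\<Sum>y'\<in>Y. pmf \<mu> (x, y')) \<le> 2 powr k * (\<Sum>y'\<in>Y. pmf \<mu> (x, y') * Gb \<pi> t y'))))"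
    by (simp add: sum.cartesian_product' bad_def good_def K_def mY_def SA_def mX_def SB_def sum_distrib_left mult_ac)
  also have "\<dots> \<le> (IC \<pi> \<mu> + 4) / k" by (rule info_facts(3)[OF fX fY supp kpos])
  also have "\<dots> \<le> \<delta> / 2" by (rule lossb)
  finally show ?thesis .
qed

lemma feasible: "prt_feasible X Y Z S f \<mu> (\<epsilon> + 3 * \<delta>) eta p"
proof -
  define C where "C xy = (if xy \<in> S
      then measure_pmf.expectation RP (\<lambda>r. of_bool (fst xy \<in> SAz r (f (fst xy) (snd xy)) \<and> snd xy \<in> SBz r (f (fst xy) (snd xy))))
      else (\<Sum>z\<in>Z. measure_pmf.expectation RP (\<lambda>r. of_bool (fst xy \<in> SAz r z \<and> snd xy \<in> SBz r z))) :: real)" for xy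
  define c where "c = 2 * real (card L) / n + rho^2"
  have fXY: "finite (X \<times> Y)" using fX fY by simp
  have LHS: "(\<Sum>xy\<in>S. pmf \<mu> xy * (\<Sum>R\<in>{R\<in>rects X Y. xy \<in> R}. p R (f (fst xy) (snd xy))))
       + (\<Sum>xy\<in>(X \<times> Y) - S. pmf \<mu> xy * (\<Sum>z\<in>Z. \<Sum>R\<in>{R\<in>rects X Y. xy \<in> R}. p R z))
       = (\<Sum>xy\<in>X \<times> Y. pmf \<mu> xy * C xy) / card Z"
  proof -
    have "(\<Sum>xy\<in>S. pmf \<mu> xy * (\<Sum>R\<in>{R\<in>rects X Y. xy \<in> R}. p R (f (fst xy) (snd xy))))
        = (\<Sum>xy\<in>S. pmf \<mu> xy * C xy / card Z)"
      by (intro sum.cong refl) (simp add: p_cov C_def)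
    moreover have "(\<Sum>xy\<in>(X \<times> Y) - S. pmf \<mu> xy * (\<Sum>z\<in>Z. \<Sum>R\<in>{R\<in>rects X Y. xy \<in> R}. p R z))
        = (\<Sum>xy\<in>(X \<times> Y) - S. pmf \<mu> xy * C xy / card Z)"
      by (intro sum.cong refl) (simp add: p_cov C_def sum_divide_distrib[symmetric])
    moreover have "(\<Sum>xy\<in>X \<times> Y. pmf \<mu> xy * C xy / card Z) = (\<Sum>xy\<in>(X \<times> Y) - S. pmf \<mu> xy * C xy / card Z) + (\<Sum>xy\<in>S. pmf \<mu> xy * C xy / card Z)"
      by (rule sum.subset_diff[OF SXY fXY])
    ultimately show ?thesis by (simp add: sum_divide_distrib)
  qed
  have low: "pmf \<mu> xy * C xy \<ge> pmf \<mu> xy * (rho * (1 - err_pt S f \<pi> (fst xy) (snd xy) - bad (fst xy) (snd xy)) - c)" for xy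
  proof (cases "pmf \<mu> xy > 0")
    case True
    obtain x y where xy: "xy = (x, y)" by (cases xy)
    have "C xy \<ge> rho * (1 - err_pt S f \<pi> (fst xy) (snd xy) - bad (fst xy) (snd xy)) - c"
      using cov_lower[of x y] True unfolding xy C_def c_def by (simp add: diff_diff_eq split: if_splits)
    then show ?thesis using True by (intro mult_left_mono) auto
  next
    case False
    then have "pmf \<mu> xy = 0" using pmf_nonneg[of \<mu> xy] by simp
    then show ?thesis by simp
  qed
  have "(\<Sum>xy\<in>X \<times> Y. pmf \<mu> xy * C xy) \<ge> (\<Sum>xy\<in>X \<times> Y. pmf \<mu> xy * (rho * (1 - err_pt S f \<pi> (fst xy) (snd xy) - bad (fst xy) (snd xy)) - c))"
    by (intro sum_mono low)
  also have "(\<Sum>xy\<in>X \<times> Y. pmf \<mu> xy * (rho * (1 - err_pt S f \<pi> (fst xy) (snd xy) - bad (fst xy) (snd xy)) - c))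
     = rho * (\<Sum>xy\<in>X \<times> Y. pmf \<mu> xy) - rho * (\<Sum>xy\<in>X \<times> Y. pmf \<mu> xy * err_pt S f \<pi> (fst xy) (snd xy))
       - rho * (\<Sum>xy\<in>X \<times> Y. pmf \<mu> xy * bad (fst xy) (snd xy)) - c * (\<Sum>xy\<in>X \<times> Y. pmf \<mu> xy)"
    by (simp add: algebra_simps sum_subtractf sum.distrib sum_distrib_left sum_distrib_right)
  also have "\<dots> = rho - rho * err_dist S f \<pi> \<mu> - rho * (\<Sum>xy\<in>X \<times> Y. pmf \<mu> xy * bad (fst xy) (snd xy)) - c"
    by (simp add: sum_mu1 err_dist_sum)
  finally have S1: "(\<Sum>xy\<in>X \<times> Y. pmf \<mu> xy * C xy) \<ge> rho - rho * err_dist S f \<pi> \<mu> - rho * (\<Sum>xy\<in>X \<times> Y. pmf \<mu> xy * bad (fst xy) (snd xy)) - c" .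
  have e1: "rho * err_dist S f \<pi> \<mu> \<le> rho * \<epsilon>" using err rho_pos by (intro mult_left_mono) auto
  have e2': "rho * (\<Sum>xy\<in>X \<times> Y. pmf \<mu> xy * bad (fst xy) (snd xy)) \<le> rho * (\<delta> / 2)"
    using loss_sum rho_pos by (intro mult_left_mono) auto
  then have e2: "rho * (\<Sum>xy\<in>X \<times> Y. pmf \<mu> xy * bad (fst xy) (snd xy)) \<le> rho * \<delta> / 2" by simp
  have e3: "2 * real (card L) / n \<le> rho * \<delta> / 2"
  proof -
    have "4 * real (card L) \<le> real n * rho * \<delta>" using nbig by (simp add: rho_def K_def mult_ac)
    then show ?thesis using npos by (simp add: field_simps)
  qed
  have e4: "rho^2 \<le> rho * \<delta>" using rho_le rho_pos by (simp add: power2_eq_square mult_left_mono)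
  have S2': "(\<Sum>xy\<in>X \<times> Y. pmf \<mu> xy * C xy) \<ge> rho - rho * \<epsilon> - 2 * (rho * \<delta>)"
    using S1 e1 e2 e3 e4 unfolding c_def by linarith
  have S2: "(\<Sum>xy\<in>X \<times> Y. pmf \<mu> xy * C xy) \<ge> rho * (1 - \<epsilon> - 2 * \<delta>)"
    using S2' by (simp add: algebra_simps)
  have e5: "(1 - (\<epsilon> + 3 * \<delta>)) * (1 + \<delta>) \<le> 1 - \<epsilon> - 2 * \<delta>"
  proof -
    have "(1 - (\<epsilon> + 3 * \<delta>)) * (1 + \<delta>) = 1 - \<epsilon> - 2 * \<delta> - \<delta> * (\<epsilon> + 3 * \<delta>)" by (simp add: algebra_simps)
    moreover have "\<delta> * (\<epsilon> + 3 * \<delta>) \<ge> 0" using dpos eps0 by simp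
    ultimately show ?thesis by linarith
  qed
  have S3: "(1 - (\<epsilon> + 3 * \<delta>)) * eta \<le> (\<Sum>xy\<in>X \<times> Y. pmf \<mu> xy * C xy) / card Z"
  proof -
    have "(1 - (\<epsilon> + 3 * \<delta>)) * eta = ((1 - (\<epsilon> + 3 * \<delta>)) * (1 + \<delta>)) * rho / card Z"
      unfolding eta_def by (simp add: mult_ac)
    also have "\<dots> \<le> (1 - \<epsilon> - 2 * \<delta>) * rho / card Z"
      using e5 rho_pos by (intro divide_right_mono mult_right_mono) auto
    also have "\<dots> \<le> (\<Sum>xy\<in>X \<times> Y. pmf \<mu> xy * C xy) / card Z"
      using S2 by (intro divide_right_mono) (auto simp: mult_ac)
    finally show ?thesis .
  qed
  show ?thesis unfolding prt_feasible_def
    using eta_pos p_nn S3 LHS cond_ii p_total by auto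
qed

end

lemma prt_mu_bound:
  fixes \<pi> :: "('x, 'y, 'z) proto"
  assumes fX: "finite X" and fY: "finite Y" and fZ: "finite Z" and Zne: "Z \<noteq> {}"
    and SXY: "S \<subseteq> X \<times> Y" and fS: "\<And>x y. (x, y) \<in> S \<Longrightarrow> f x y \<in> Z"
    and supp: "set_pmf \<mu> \<subseteq> X \<times> Y" and outs: "outputs \<pi> \<subseteq> Z"
    and err: "err_dist S f \<pi> \<mu> \<le> \<epsilon>" and eps0: "\<epsilon> \<ge> 0"
    and dpos: "\<delta> > 0" and dhalf: "\<delta> < 1/2"
  shows "prt_mu X Y Z S f \<mu> (\<epsilon> + 3 * \<delta>) \<le> real (card Z) * 2 powr (4 * (IC \<pi> \<mu> + 4) / \<delta>) / \<delta>"
    and "prt_mu X Y Z S f \<mu> (\<epsilon> + 3 * \<delta>) \<ge> 0"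
proof -
  define I where "I = IC \<pi> \<mu>"
  have I0: "I \<ge> 0" unfolding I_def by (rule info_facts(1)[OF fX fY supp])
  define k where "k = 2 * (I + 4) / \<delta>"
  have kpos: "k > 0" unfolding k_def using I0 dpos by simp
  define rho where "rho = \<delta> / (2 powr k)^2"
  have rpos: "rho > 0" unfolding rho_def using dpos by simp
  define n where "n = nat \<lceil>4 * real (card (leaves \<pi>)) / (rho * \<delta>)\<rceil> + 1"
  have npos: "n > 0" unfolding n_def by simp
  have nbig: "4 * real (card (leaves \<pi>)) \<le> real n * (\<delta> / (2 powr k)^2) * \<delta>"
  proof -
    have "4 * real (card (leaves \<pi>)) / (rho * \<delta>) \<le> real n" unfolding n_def by linarith
    then have "4 * real (card (leaves \<pi>)) \<le> real n * (rho * \<delta>)" using rpos dpos by (simp add: field_simps)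
    then show ?thesis unfolding rho_def by (simp add: mult_ac)
  qed
  have lossb: "(IC \<pi> \<mu> + 4) / k \<le> \<delta> / 2" unfolding k_def I_def[symmetric] using I0 dpos by (simp add: field_simps)
  interpret lp X Y Z S f \<mu> \<pi> \<epsilon> \<delta> k n
    by unfold_locales (use fX fY fZ Zne SXY fS supp outs err eps0 dpos dhalf kpos lossb npos nbig in auto)
  have feas: "prt_feasible X Y Z S f \<mu> (\<epsilon> + 3 * \<delta>) eta p" by (rule feasible)
  define A where "A = {1 / \<eta> | \<eta> p. prt_feasible X Y Z S f \<mu> (\<epsilon> + 3 * \<delta>) \<eta> p}"
  have inA: "1 / eta \<in> A" unfolding A_def using feas by blast
  have A_nn: "a \<ge> 0" if "a \<in> A" for a using that unfolding A_def prt_feasible_def by auto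
  have bdd: "bdd_below A" unfolding bdd_below_def using A_nn by blast
  have "prt_mu X Y Z S f \<mu> (\<epsilon> + 3 * \<delta>) = Inf A" unfolding prt_mu_def A_def by simp
  then have le: "prt_mu X Y Z S f \<mu> (\<epsilon> + 3 * \<delta>) \<le> 1 / eta" using cInf_lower[OF inA bdd] by simp
  have cZ: "real (card Z) > 0" using fZ Zne by (simp add: card_gt_0_iff)
  have "1 / eta = real (card Z) * K^2 / (\<delta> * (1 + \<delta>))"
    unfolding eta_def local.rho_def using K_pos dpos cZ by (simp add: field_simps)
  also have "\<dots> \<le> real (card Z) * K^2 / \<delta>"
    using cZ dpos K_pos by (intro divide_left_mono) (auto intro!: mult_pos_pos)
  also have "K^2 = 2 powr (4 * (IC \<pi> \<mu> + 4) / \<delta>)"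
  proof -
    have "K^2 = 2 powr (2 * k)" unfolding K_def by (simp add: powr_realpow[symmetric] powr_powr power2_eq_square powr_add[symmetric])
    then show ?thesis unfolding k_def I_def by (simp add: field_simps)
  qed
  finally show "prt_mu X Y Z S f \<mu> (\<epsilon> + 3 * \<delta>) \<le> real (card Z) * 2 powr (4 * (IC \<pi> \<mu> + 4) / \<delta>) / \<delta>"
    using le by simp
  have "A \<noteq> {}" using inA by auto
  then have "Inf A \<ge> 0" using A_nn by (intro cInf_greatest) auto
  then show "prt_mu X Y Z S f \<mu> (\<epsilon> + 3 * \<delta>) \<ge> 0" unfolding prt_mu_def A_def by simp
qed

primrec askA :: "'x list \<Rightarrow> ('x \<Rightarrow> ('x, 'y, 'z) proto) \<Rightarrow> 'z \<Rightarrow> ('x, 'y, 'z) proto" where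
  "askA [] k z0 = Out z0"
| "askA (v # vs) k z0 = AMsg (\<lambda>x. return_pmf (x = v)) (\<lambda>b. if b then k v else askA vs k z0)"

primrec askB :: "'y list \<Rightarrow> ('y \<Rightarrow> ('x, 'y, 'z) proto) \<Rightarrow> 'z \<Rightarrow> ('x, 'y, 'z) proto" where
  "askB [] k z0 = Out z0"
| "askB (w # ws) k z0 = BMsg (\<lambda>y. return_pmf (y = w)) (\<lambda>b. if b then k w else askB ws k z0)"

lemma map_snd_cons: "map_pmf snd (map_pmf (\<lambda>(t, z). (b # t, z)) R) = map_pmf snd R"
  by (simp add: pmf.map_comp o_def case_prod_beta)

lemma run_askA: "x \<in> set xs \<Longrightarrow> map_pmf snd (run (askA xs k z0) x y) = map_pmf snd (run (k x) x y)"
proof (induction xs)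
  case Nil then show ?case by simp
next
  case (Cons v vs)
  have "map_pmf snd (run (askA (v # vs) k z0) x y) = map_pmf snd (run (if x = v then k v else askA vs k z0) x y)"
    by (simp add: bind_return_pmf map_snd_cons del: if_split)
  then show ?case using Cons by (cases "x = v") auto
qed

lemma run_askB: "y \<in> set ys \<Longrightarrow> map_pmf snd (run (askB ys k z0) x y) = map_pmf snd (run (k y) x y)"
proof (induction ys)
  case Nil then show ?case by simp
next
  case (Cons w ws)
  have "map_pmf snd (run (askB (w # ws) k z0) x y) = map_pmf snd (run (if y = w then k w else askB ws k z0) x y)"
    by (simp add: bind_return_pmf map_snd_cons del: if_split)
  then show ?case using Cons by (cases "y = w") auto
qed

lemma outputs_askA: assumes "\<And>v. outputs (k v) \<subseteq> Z" "z0 \<in> Z" shows "outputs (askA xs k z0) \<subseteq> Z"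
proof (induction xs)
  case Nil then show ?case using assms by simp
next
  case (Cons v vs)
  have "outputs (k v) \<subseteq> Z" by (rule assms(1))
  then show ?case using Cons by (auto split: if_splits)
qed

lemma outputs_askB: assumes "\<And>v. outputs (k v) \<subseteq> Z" "z0 \<in> Z" shows "outputs (askB ys k z0) \<subseteq> Z"
proof (induction ys)
  case Nil then show ?case using assms by simp
next
  case (Cons v vs)
  have "outputs (k v) \<subseteq> Z" by (rule assms(1))
  then show ?case using Cons by (auto split: if_splits)
qed

definition pi0 :: "nat set \<Rightarrow> nat set \<Rightarrow> (nat \<times> nat) set \<Rightarrow> (nat \<Rightarrow> nat \<Rightarrow> nat) \<Rightarrow> nat \<Rightarrow> (nat, nat, nat) proto" where
  "pi0 X Y S f z0 = askA (sorted_list_of_set X)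
     (\<lambda>v. askB (sorted_list_of_set Y) (\<lambda>w. Out (if (v, w) \<in> S then f v w else z0)) z0) z0"

lemma pi0_outputs: "z0 \<in> Z \<Longrightarrow> (\<And>x y. (x, y) \<in> S \<Longrightarrow> f x y \<in> Z) \<Longrightarrow> outputs (pi0 X Y S f z0) \<subseteq> Z"
  unfolding pi0_def by (intro outputs_askA outputs_askB) auto

lemma pi0_run: "finite X \<Longrightarrow> finite Y \<Longrightarrow> x \<in> X \<Longrightarrow> y \<in> Y \<Longrightarrow>
  map_pmf snd (run (pi0 X Y S f z0) x y) = return_pmf (if (x, y) \<in> S then f x y else z0)"
  unfolding pi0_def by (simp add: run_askA run_askB)

lemma pi0_err: "finite X \<Longrightarrow> finite Y \<Longrightarrow> set_pmf \<mu> \<subseteq> X \<times> Y \<Longrightarrow> err_dist S f (pi0 X Y S f z0) \<mu> = 0"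
proof -
  assume fX: "finite X" and fY: "finite Y" and supp: "set_pmf \<mu> \<subseteq> X \<times> Y"
  have z: "err_pt S f (pi0 X Y S f z0) x y = 0" if "x \<in> X" "y \<in> Y" for x y
  proof (cases "(x, y) \<in> S")
    case True
    have "measure_pmf.prob (run (pi0 X Y S f z0) x y) {t. snd t \<noteq> f x y}
        = measure_pmf.prob (map_pmf snd (run (pi0 X Y S f z0) x y)) {z. z \<noteq> f x y}"
      by (simp add: vimage_def)
    also have "\<dots> = 0" using pi0_run[OF fX fY that, of S f z0] True by simp
    finally show ?thesis using True by (simp add: err_pt_def)
  next
    case False then show ?thesis by (simp add: err_pt_def)
  qed
  show ?thesis unfolding err_dist_def
    by (subst integral_measure_pmf[of "X \<times> Y"]) (use fX fY supp z in \<open>auto intro!: sum.neutral\<close>)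
qed

lemma log2_inv_le: assumes "0 < \<delta>" "\<delta> < 1" shows "- log 2 \<delta> \<le> 2 / \<delta>"
proof -
  have "ln (1 / \<delta>) \<le> 1 / \<delta> - 1" using assms by (intro ln_le_minus_one) auto
  then have l1: "- ln \<delta> \<le> 1 / \<delta>" using assms by (simp add: ln_div)
  have l0: "- ln \<delta> \<ge> 0" using assms by simp
  have "- log 2 \<delta> = - ln \<delta> / ln 2" by (simp add: log_def)
  also have "\<dots> \<le> (1 / \<delta>) / ln 2" using l1 by (intro divide_right_mono) auto
  also have "\<dots> \<le> (1 / \<delta>) / (2 / 3)" using ln2_ge_two_thirds assms by (intro divide_left_mono) auto
  also have "\<dots> \<le> 2 / \<delta>" using assms by (simp add: field_simps)
  finally show ?thesis .
qed

theorem mainTheorem2: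
  shows "\<exists>C::real. C > 0 \<and>
    (\<forall>(X::nat set) (Y::nat set) (Z::nat set) (S::(nat \<times> nat) set) (f::nat \<Rightarrow> nat \<Rightarrow> nat) (\<epsilon>::real) (\<delta>::real).
       finite X \<and> finite Y \<and> finite Z \<and> X \<noteq> {} \<and> Y \<noteq> {} \<and> Z \<noteq> {} \<and>
       S \<subseteq> X \<times> Y \<and> (\<forall>(x, y)\<in>S. f x y \<in> Z) \<and>
       0 < \<epsilon> \<and> \<epsilon> < 1/2 \<and> 0 < \<delta> \<and> \<delta> < 1/2 \<longrightarrow>
       IC_D X Y Z S f \<epsilon> \<ge>
         \<delta>\<^sup>2 / C * (log 2 (prt X Y Z S f (\<epsilon> + 3 * \<delta>)) - log 2 (real (card Z))) - \<delta>)"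
proof (intro exI[of _ 18] conjI allI impI)
  show "(18::real) > 0" by simp
  fix X Y Z :: "nat set" and S :: "(nat \<times> nat) set" and f :: "nat \<Rightarrow> nat \<Rightarrow> nat" and \<epsilon> \<delta> :: real
  assume H: "finite X \<and> finite Y \<and> finite Z \<and> X \<noteq> {} \<and> Y \<noteq> {} \<and> Z \<noteq> {} \<and>
       S \<subseteq> X \<times> Y \<and> (\<forall>(x, y)\<in>S. f x y \<in> Z) \<and>
       0 < \<epsilon> \<and> \<epsilon> < 1/2 \<and> 0 < \<delta> \<and> \<delta> < 1/2"
  then have fX: "finite X" and fY: "finite Y" and fZ: "finite Z" and Xne: "X \<noteq> {}" and Yne: "Y \<noteq> {}"
    and Zne: "Z \<noteq> {}" and SXY: "S \<subseteq> X \<times> Y" and fS: "\<And>x y. (x, y) \<in> S \<Longrightarrow> f x y \<in> Z"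
    and e0: "0 < \<epsilon>" and d0: "0 < \<delta>" and d1: "\<delta> < 1/2" by auto
  obtain z0 where z0: "z0 \<in> Z" using Zne by auto
  obtain x0 where x0: "x0 \<in> X" using Xne by auto
  obtain y0 where y0: "y0 \<in> Y" using Yne by auto
  define Mset where "Mset = {\<mu> :: (nat \<times> nat) pmf. set_pmf \<mu> \<subseteq> X \<times> Y}"
  define Pset where "Pset \<mu> = {\<pi> :: (nat, nat, nat) proto. outputs \<pi> \<subseteq> Z \<and> err_dist S f \<pi> \<mu> \<le> \<epsilon>}" for \<mu>
  define \<pi>0 where "\<pi>0 = pi0 X Y S f z0"
  define B0 where "B0 = 2 * log 2 (card (leaves \<pi>0))"
  have cZ: "real (card Z) > 0" using fZ Zne by (simp add: card_gt_0_iff)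
  have \<pi>0P: "\<pi>0 \<in> Pset \<mu>" if "\<mu> \<in> Mset" for \<mu>
    using that pi0_outputs[OF z0, of S f X Y] fS pi0_err[OF fX fY, of \<mu> S f z0] e0
    unfolding Pset_def Mset_def \<pi>0_def by auto
  have ICnn: "IC \<pi> \<mu> \<ge> 0" if "\<mu> \<in> Mset" for \<mu> and \<pi> :: "(nat, nat, nat) proto"
    using that info_facts(1)[OF fX fY] unfolding Mset_def by auto
  have ICmu: "IC_mu Z S f \<mu> \<epsilon> = (INF \<pi>\<in>Pset \<mu>. IC \<pi> \<mu>)" for \<mu>
    unfolding IC_mu_def Pset_def by simp
  have ICmu_le: "IC_mu Z S f \<mu> \<epsilon> \<le> B0" if "\<mu> \<in> Mset" for \<mu>
  proof -
    have bdd: "bdd_below ((\<lambda>\<pi>. IC \<pi> \<mu>) ` Pset \<mu>)"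
      using ICnn[OF that] unfolding bdd_below_def by auto
    have "IC_mu Z S f \<mu> \<epsilon> \<le> IC \<pi>0 \<mu>" unfolding ICmu by (rule cINF_lower[OF bdd \<pi>0P[OF that]])
    also have "\<dots> \<le> B0" unfolding B0_def using that info_facts(2)[OF fX fY] unfolding Mset_def by auto
    finally show ?thesis .
  qed
  have ICmu_ge: "\<phi> \<le> IC_mu Z S f \<mu> \<epsilon>" if "\<mu> \<in> Mset" "\<And>\<pi>. \<pi> \<in> Pset \<mu> \<Longrightarrow> \<phi> \<le> IC \<pi> \<mu>" for \<mu> \<phi>
  proof -
    have "Pset \<mu> \<noteq> {}" using \<pi>0P[OF that(1)] by auto
    then show ?thesis unfolding ICmu using that(2) by (intro cINF_greatest) auto
  qed
  define \<mu>0 where "\<mu>0 = return_pmf (x0, y0)"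
  have \<mu>0M: "\<mu>0 \<in> Mset" unfolding Mset_def \<mu>0_def using x0 y0 by simp
  have Mne: "Mset \<noteq> {}" using \<mu>0M by auto
  define D where "D = IC_D X Y Z S f \<epsilon>"
  have Ddef: "D = (SUP \<mu>\<in>Mset. IC_mu Z S f \<mu> \<epsilon>)" unfolding D_def IC_D_def Mset_def by simp
  have bddD: "bdd_above ((\<lambda>\<mu>. IC_mu Z S f \<mu> \<epsilon>) ` Mset)"
    using ICmu_le unfolding bdd_above_def by auto
  have D_ge: "IC_mu Z S f \<mu> \<epsilon> \<le> D" if "\<mu> \<in> Mset" for \<mu>
    unfolding Ddef by (rule cSUP_upper[OF that bddD])
  have D0: "D \<ge> 0"
  proof -
    have "0 \<le> IC_mu Z S f \<mu>0 \<epsilon>" using ICnn[OF \<mu>0M] by (intro ICmu_ge[OF \<mu>0M]) auto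
    then show ?thesis using D_ge[OF \<mu>0M] by linarith
  qed
  define Q where "Q = real (card Z) * 2 powr (4 * (D + 4) / \<delta>) / \<delta>"
  have Qpos: "Q > 0" unfolding Q_def using cZ d0 by simp
  have prt_le: "prt_mu X Y Z S f \<mu> (\<epsilon> + 3 * \<delta>) \<le> Q" if M: "\<mu> \<in> Mset" for \<mu>
  proof (cases "prt_mu X Y Z S f \<mu> (\<epsilon> + 3 * \<delta>) > 0")
    case False then show ?thesis using Qpos by simp
  next
    case True
    define P where "P = prt_mu X Y Z S f \<mu> (\<epsilon> + 3 * \<delta>)"
    have Ppos: "P * \<delta> / card Z > 0" using True d0 cZ unfolding P_def by simp
    have supp: "set_pmf \<mu> \<subseteq> X \<times> Y" using M unfolding Mset_def by simp
    have "\<delta> / 4 * log 2 (P * \<delta> / card Z) - 4 \<le> IC \<pi> \<mu>" if "\<pi> \<in> Pset \<mu>" for \<pi>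
    proof -
      have outs: "outputs \<pi> \<subseteq> Z" and err: "err_dist S f \<pi> \<mu> \<le> \<epsilon>" using that unfolding Pset_def by auto
      have "P \<le> real (card Z) * 2 powr (4 * (IC \<pi> \<mu> + 4) / \<delta>) / \<delta>"
        unfolding P_def by (rule prt_mu_bound(1)[OF fX fY fZ Zne SXY fS supp outs err _ d0 d1]) (use e0 in auto)
      then have "P * \<delta> / card Z \<le> 2 powr (4 * (IC \<pi> \<mu> + 4) / \<delta>)" using d0 cZ by (simp add: field_simps)
      then have "log 2 (P * \<delta> / card Z) \<le> 4 * (IC \<pi> \<mu> + 4) / \<delta>" using Ppos by (simp add: log_le_iff)
      then have "\<delta> / 4 * log 2 (P * \<delta> / card Z) \<le> \<delta> / 4 * (4 * (IC \<pi> \<mu> + 4) / \<delta>)"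
        using d0 by (intro mult_left_mono) auto
      also have "\<dots> = IC \<pi> \<mu> + 4" using d0 by (simp add: field_simps)
      finally show ?thesis by simp
    qed
    then have "\<delta> / 4 * log 2 (P * \<delta> / card Z) - 4 \<le> IC_mu Z S f \<mu> \<epsilon>" by (intro ICmu_ge[OF M])
    then have "\<delta> / 4 * log 2 (P * \<delta> / card Z) - 4 \<le> D" using D_ge[OF M] by linarith
    then have "log 2 (P * \<delta> / card Z) \<le> 4 * (D + 4) / \<delta>" using d0 by (simp add: field_simps)
    then have "P * \<delta> / card Z \<le> 2 powr (4 * (D + 4) / \<delta>)" using Ppos by (simp add: log_le_iff)
    then have "P \<le> Q" unfolding Q_def using d0 cZ by (simp add: field_simps)
    then show ?thesis unfolding P_def .
  qed
  have prt_nn: "prt_mu X Y Z S f \<mu> (\<epsilon> + 3 * \<delta>) \<ge> 0" if M: "\<mu> \<in> Mset" for \<mu>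
  proof -
    have supp: "set_pmf \<mu> \<subseteq> X \<times> Y" using M unfolding Mset_def by simp
    have outs: "outputs \<pi>0 \<subseteq> Z" and err: "err_dist S f \<pi>0 \<mu> \<le> \<epsilon>" using \<pi>0P[OF M] unfolding Pset_def by auto
    show ?thesis by (rule prt_mu_bound(2)[OF fX fY fZ Zne SXY fS supp outs err _ d0 d1]) (use e0 in auto)
  qed
  define PR where "PR = prt X Y Z S f (\<epsilon> + 3 * \<delta>)"
  have PRdef: "PR = (SUP \<mu>\<in>Mset. prt_mu X Y Z S f \<mu> (\<epsilon> + 3 * \<delta>))" unfolding PR_def prt_def Mset_def by simp
  have bddP: "bdd_above ((\<lambda>\<mu>. prt_mu X Y Z S f \<mu> (\<epsilon> + 3 * \<delta>)) ` Mset)"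
    using prt_le unfolding bdd_above_def by auto
  have PR_le: "PR \<le> Q" unfolding PRdef using Mne prt_le by (intro cSUP_least) auto
  have PR_ge: "PR \<ge> 0"
  proof -
    have "prt_mu X Y Z S f \<mu>0 (\<epsilon> + 3 * \<delta>) \<le> PR" unfolding PRdef by (rule cSUP_upper[OF \<mu>0M bddP])
    then show ?thesis using prt_nn[OF \<mu>0M] by linarith
  qed
  have logZ: "log 2 (real (card Z)) \<ge> 0" using cZ by simp
  have main: "\<delta>\<^sup>2 / 18 * (log 2 PR - log 2 (real (card Z))) - \<delta> \<le> D"
  proof (cases "PR = 0")
    case True
    have l0: "log 2 PR = 0" using True by (simp add: log_def)
    have "\<delta>\<^sup>2 / 18 * (log 2 PR - log 2 (real (card Z))) \<le> 0"
      unfolding l0 using logZ by (intro mult_nonneg_nonpos) auto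
    then show ?thesis using D0 d0 by linarith
  next
    case False
    then have PRpos: "PR > 0" using PR_ge by simp
    have "log 2 PR \<le> log 2 Q" using PRpos PR_le Qpos by simp
    also have "log 2 Q = log 2 (real (card Z)) + 4 * (D + 4) / \<delta> - log 2 \<delta>"
      unfolding Q_def using cZ d0 by (simp add: log_mult log_divide)
    finally have "log 2 PR - log 2 (real (card Z)) \<le> 4 * (D + 4) / \<delta> - log 2 \<delta>" by simp
    also have "\<dots> \<le> 4 * (D + 4) / \<delta> + 2 / \<delta>" using log2_inv_le[of \<delta>] d0 d1 by simp
    also have "\<dots> = (4 * D + 18) / \<delta>" using d0 by (simp add: field_simps)
    finally have L: "log 2 PR - log 2 (real (card Z)) \<le> (4 * D + 18) / \<delta>" .
    have "\<delta>\<^sup>2 / 18 * (log 2 PR - log 2 (real (card Z))) \<le> \<delta>\<^sup>2 / 18 * ((4 * D + 18) / \<delta>)"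
      using L by (intro mult_left_mono) auto
    also have "\<dots> = \<delta> * (4 * D) / 18 + \<delta>" using d0 by (simp add: field_simps power2_eq_square)
    also have "\<delta> * (4 * D) / 18 \<le> D"
    proof -
      have "\<delta> * (4 * D) \<le> 1 * (4 * D)" using d1 D0 by (intro mult_right_mono) auto
      then have "\<delta> * (4 * D) \<le> 4 * D" by simp
      then show ?thesis using D0 by linarith
    qed
    finally show ?thesis by simp
  qed
  then show "\<delta>\<^sup>2 / 18 * (log 2 (prt X Y Z S f (\<epsilon> + 3 * \<delta>)) - log 2 (real (card Z))) - \<delta> \<le> IC_D X Y Z S f \<epsilon>"
    unfolding PR_def D_def .
qed

end
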